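(* Let $X$ be a finite set, let $N$ be a rooted phylogenetic network on $X$, and let $\widetilde{N}$ be its normalisation. Then: (i) $\widetilde{N}$ is a normal network on $X$; moreover $\widetilde{N}=N$ (up to isomorphism fixing each leaf) if and only if $N$ is a normal network; and the normalisation map $\varphi: N\mapsto \widetilde{N}$ is idempotent, i.e. $\widetilde{\widetilde{N}}=\widetilde{N}$. (ii) For any two vertices $u,v$ of $\widetilde{N}$, there is a directed path from $u$ to $v$ in $\widetilde{N}$ if and only if there is a directed path from $u$ to $v$ in $N$. (iii) For every vertex $v$ of $\widetilde{N}$, the cluster $C_{\widetilde{N}}(v)$ equals the cluster $C_N(v)$. (iv) $\widetilde{N}$ is a tree if and only if the collection $\{C_N(v): v\in V_{\rm vis}(N)\}$ is a hierarchy on $X$.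
   Context: A rooted phylogenetic network on a finite set $X$ is a finite acyclic directed graph $N$ with a single vertex of in-degree $0$ (the root $\rho$), all other vertices being of one of three types: (1) in-degree $1$ and out-degree $0$ (the leaves, which form exactly the set $X$); (2) in-degree $1$ and out-degree at least $2$; (3) out-degree $1$ and in-degree at least $2$ (reticulate vertices). Two networks are identified if there is a digraph isomorphism between them mapping each leaf $x$ to leaf $x$. A network is a tree if it has no reticulate vertices. A vertex $v$ of $N$ is visible if there is a leaf $x\in X$ such that every directed path from $\rho$ to $x$ passes through $v$; the root and all leaves are visible. Let $V_{\rm vis}(N)$ be the set of visible vertices. A network is tree-child if every vertex is visible. A shortcut is an arc $(u,v)$ such that there is also a directed path of length at least $2$ from $u$ to $v$. A network is normal if it is tree-child and has no shortcuts. For a vertex $v$, the cluster $C_N(v)$ is the set of leaves $x\in X$ such that there is a directed path (possibly of length $0$) from $v$ to $x$ in $N$. A hierarchy on $X$ is a collection of subsets of $X$ any two of which are either disjoint or nested (one contains the other). Define the directed graph ${\rm Cov}(N)$ with vertex set $V_{\rm vis}(N)$ as follows: for each pair $u\neq v$ of visible vertices such that $N$ has a directed path from $u$ to $v$, put an arc $(u,v)$; then delete every shortcut arc of this graph (so ${\rm Cov}(N)$ is the Hasse diagram of the reachability partial order on $V_{\rm vis}(N)$). A vertex is subdividing if its in-degree and out-degree are both $1$. The normalisation $\widetilde{N}$ of $N$ is the directed graph obtained from ${\rm Cov}(N)$ by suppressing every subdividing vertex (i.e. replacing each maximal path whose interior vertices are subdividing by a single arc between its endpoints); its vertex set is a subset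 of $V_{\rm vis}(N)$. *)

theory Defs
  imports Main
begin

text \<open>A directed graph on vertex type 'v is given by a vertex set V and an arc set A.
  The leaves of a network on X are the elements of X themselves (X is a subset of V).\<close>

definition is_path :: "('v \<times> 'v) set \<Rightarrow> 'v list \<Rightarrow> 'v \<Rightarrow> 'v \<Rightarrow> bool" where
  "is_path A p u v \<longleftrightarrow> p \<noteq> [] \<and> hd p = u \<and> last p = v \<and>
     (\<forall>i. Suc i < length p \<longrightarrow> (p ! i, p ! Suc i) \<in> A)"

definition reach :: "('v \<times> 'v) set \<Rightarrow> 'v \<Rightarrow> 'v \<Rightarrow> bool" where
  "reach A u v \<longleftrightarrow> (\<exists>p. is_path A p u v)"

definition indeg :: "('v \<times> 'v) set \<Rightarrow> 'v \<Rightarrow> nat" where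
  "indeg A v = card {u. (u, v) \<in> A}"

definition outdeg :: "('v \<times> 'v) set \<Rightarrow> 'v \<Rightarrow> nat" where
  "outdeg A v = card {w. (v, w) \<in> A}"

definition root :: "'v set \<Rightarrow> ('v \<times> 'v) set \<Rightarrow> 'v" where
  "root V A = (THE r. r \<in> V \<and> indeg A r = 0)"

definition phylo_network :: "'v set \<Rightarrow> 'v set \<Rightarrow> ('v \<times> 'v) set \<Rightarrow> bool" where
  "phylo_network X V A \<longleftrightarrow>
     finite V \<and> A \<subseteq> V \<times> V \<and>
     (\<forall>v p. is_path A p v v \<longrightarrow> length p = 1) \<and>
     (\<exists>!r. r \<in> V \<and> indeg A r = 0) \<and>
     (\<forall>v\<in>V. indeg A v \<noteq> 0 \<longrightarrow>
        (indeg A v = 1 \<and> outdeg A v = 0) \<or>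
        (indeg A v = 1 \<and> outdeg A v \<ge> 2) \<or>
        (outdeg A v = 1 \<and> indeg A v \<ge> 2)) \<and>
     X = {v \<in> V. indeg A v = 1 \<and> outdeg A v = 0}"

definition visible :: "'v set \<Rightarrow> 'v set \<Rightarrow> ('v \<times> 'v) set \<Rightarrow> 'v \<Rightarrow> bool" where
  "visible X V A v \<longleftrightarrow> v \<in> V \<and>
     (v = root V A \<or> v \<in> X \<or>
      (\<exists>x\<in>X. \<forall>p. is_path A p (root V A) x \<longrightarrow> v \<in> set p))"

definition Vvis :: "'v set \<Rightarrow> 'v set \<Rightarrow> ('v \<times> 'v) set \<Rightarrow> 'v set" where
  "Vvis X V A = {v. visible X V A v}"

definition tree_child :: "'v set \<Rightarrow> 'v set \<Rightarrow> ('v \<times> 'v) set \<Rightarrow> bool" where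
  "tree_child X V A \<longleftrightarrow> (\<forall>v\<in>V. visible X V A v)"

definition shortcut :: "('v \<times> 'v) set \<Rightarrow> 'v \<Rightarrow> 'v \<Rightarrow> bool" where
  "shortcut A u v \<longleftrightarrow> (u, v) \<in> A \<and> (\<exists>p. is_path A p u v \<and> length p \<ge> 3)"

definition normal :: "'v set \<Rightarrow> 'v set \<Rightarrow> ('v \<times> 'v) set \<Rightarrow> bool" where
  "normal X V A \<longleftrightarrow> phylo_network X V A \<and> tree_child X V A \<and> (\<forall>u v. \<not> shortcut A u v)"

definition reticulate :: "'v set \<Rightarrow> ('v \<times> 'v) set \<Rightarrow> 'v \<Rightarrow> bool" where
  "reticulate V A v \<longleftrightarrow> v \<in> V \<and> outdeg A v = 1 \<and> indeg A v \<ge> 2"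

definition is_tree :: "'v set \<Rightarrow> ('v \<times> 'v) set \<Rightarrow> bool" where
  "is_tree V A \<longleftrightarrow> (\<forall>v\<in>V. \<not> reticulate V A v)"

definition cluster :: "'v set \<Rightarrow> ('v \<times> 'v) set \<Rightarrow> 'v \<Rightarrow> 'v set" where
  "cluster X A v = {x \<in> X. reach A v x}"

definition hierarchy :: "'a set set \<Rightarrow> bool" where
  "hierarchy H \<longleftrightarrow> (\<forall>S\<in>H. \<forall>T\<in>H. S \<inter> T = {} \<or> S \<subseteq> T \<or> T \<subseteq> S)"

text \<open>Cov(N): Hasse diagram of reachability on visible vertices\<close>
definition cov_A :: "'v set \<Rightarrow> 'v set \<Rightarrow> ('v \<times> 'v) set \<Rightarrow> ('v \<times> 'v) set" where
  "cov_A X V A =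
     (let R = {(u, v). u \<in> Vvis X V A \<and> v \<in> Vvis X V A \<and> u \<noteq> v \<and> reach A u v}
      in {(u, v) \<in> R. \<not> shortcut R u v})"

definition subdividing :: "('v \<times> 'v) set \<Rightarrow> 'v \<Rightarrow> bool" where
  "subdividing A v \<longleftrightarrow> indeg A v = 1 \<and> outdeg A v = 1"

text \<open>normalisation: suppress all subdividing vertices of Cov(N)\<close>
definition norm_V :: "'v set \<Rightarrow> 'v set \<Rightarrow> ('v \<times> 'v) set \<Rightarrow> 'v set" where
  "norm_V X V A = {v \<in> Vvis X V A. \<not> subdividing (cov_A X V A) v}"

definition norm_A :: "'v set \<Rightarrow> 'v set \<Rightarrow> ('v \<times> 'v) set \<Rightarrow> ('v \<times> 'v) set" where
  "norm_A X V A =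
     {(u, w). u \<in> norm_V X V A \<and> w \<in> norm_V X V A \<and>
        (\<exists>p. is_path (cov_A X V A) p u w \<and> length p \<ge> 2 \<and>
           (\<forall>i. 0 < i \<and> i < length p - 1 \<longrightarrow> subdividing (cov_A X V A) (p ! i)))}"

definition iso_fix :: "'v set \<Rightarrow> 'v set \<Rightarrow> ('v \<times> 'v) set \<Rightarrow> 'v set \<Rightarrow> ('v \<times> 'v) set \<Rightarrow> bool" where
  "iso_fix X V A V' A' \<longleftrightarrow>
     (\<exists>f. bij_betw f V V' \<and> (\<forall>u\<in>V. \<forall>w\<in>V. (u, w) \<in> A \<longleftrightarrow> (f u, f w) \<in> A') \<and>
          (\<forall>x\<in>X. f x = x))"

end

theory Submission
  imports Defs
begin
lemma is_path_Nil[simp]: "\<not> is_path B [] u v"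
  by (simp add: is_path_def)

lemma is_path_single[simp]: "is_path B [x] u v \<longleftrightarrow> x = u \<and> x = v"
  by (auto simp: is_path_def)

lemma is_path_Cons2[simp]:
  "is_path B (x#y#p) u v \<longleftrightarrow> x = u \<and> (x,y)\<in>B \<and> is_path B (y#p) y v"
proof -
  have "(\<forall>i. Suc i < length (x#y#p) \<longrightarrow> ((x#y#p)!i, (x#y#p)!Suc i)\<in>B) \<longleftrightarrow>
        (x,y)\<in>B \<and> (\<forall>i. Suc i < length (y#p) \<longrightarrow> ((y#p)!i, (y#p)!Suc i)\<in>B)"
  proof
    assume H: "\<forall>i. Suc i < length (x#y#p) \<longrightarrow> ((x#y#p)!i, (x#y#p)!Suc i)\<in>B"
    show "(x,y)\<in>B \<and> (\<forall>i. Suc i < length (y#p) \<longrightarrow> ((y#p)!i, (y#p)!Suc i)\<in>B)"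
    proof safe
      show "(x,y)\<in>B" using H[rule_format, of 0] by simp
    next
      fix i assume "Suc i < length (y#p)"
      then show "((y#p)!i, (y#p)!Suc i)\<in>B" using H[rule_format, of "Suc i"] by simp
    qed
  next
    assume H: "(x,y)\<in>B \<and> (\<forall>i. Suc i < length (y#p) \<longrightarrow> ((y#p)!i, (y#p)!Suc i)\<in>B)"
    show "\<forall>i. Suc i < length (x#y#p) \<longrightarrow> ((x#y#p)!i, (x#y#p)!Suc i)\<in>B"
    proof (intro allI impI)
      fix i assume "Suc i < length (x#y#p)"
      then show "((x#y#p)!i, (x#y#p)!Suc i)\<in>B" using H by (cases i) auto
    qed
  qed
  moreover have "last (x#y#p) = last (y#p)" by simp
  ultimately show ?thesis unfolding is_path_def
    by (metis list.discI list.sel(1))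
qed

lemma is_path_Cons_hd: "is_path B (x#p) u v \<Longrightarrow> x = u"
  by (cases p) auto

lemma path_rtrancl: "is_path B p u v \<Longrightarrow> (u,v) \<in> {(s,t)\<in>B. s\<in>set p \<and> t\<in>set p}\<^sup>*"
proof (induction p arbitrary: u)
  case Nil then show ?case by simp
next
  case (Cons x p)
  show ?case
  proof (cases p)
    case Nil then show ?thesis using Cons by auto
  next
    case (Cons y q)
    with Cons.prems have h: "x = u" "(x,y)\<in>B" "is_path B (y#q) y v" by auto
    have "(y,v) \<in> {(s,t)\<in>B. s\<in>set p \<and> t\<in>set p}\<^sup>*" using Cons.IH h(3) Cons by simp
    also have "\<dots> \<subseteq> {(s,t)\<in>B. s\<in>set (x#p) \<and> t\<in>set (x#p)}\<^sup>*"
      by (rule rtrancl_mono) auto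
    finally have "(y,v) \<in> {(s,t)\<in>B. s\<in>set (x#p) \<and> t\<in>set (x#p)}\<^sup>*" .
    moreover have "(u,y) \<in> {(s,t)\<in>B. s\<in>set (x#p) \<and> t\<in>set (x#p)}" using h Cons by auto
    ultimately show ?thesis by (meson converse_rtrancl_into_rtrancl)
  qed
qed

lemma path_rt: "is_path B p u v \<Longrightarrow> (u,v) \<in> B\<^sup>*"
  using path_rtrancl[of B p u v] rtrancl_mono[of "{(s,t)\<in>B. s\<in>set p \<and> t\<in>set p}" B] by blast

lemma path_trancl: "is_path B p u v \<Longrightarrow> length p \<ge> 2 \<Longrightarrow> (u,v) \<in> B\<^sup>+"
proof -
  assume a: "is_path B p u v" "length p \<ge> 2"
  obtain x p' where p1: "p = x#p'" using a(2) by (cases p) auto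
  obtain y q where p2: "p' = y#q" using a(2) p1 by (cases p') auto
  from a p1 p2 have "(u,y)\<in>B" "is_path B (y#q) y v" by auto
  then show ?thesis using path_rt by (meson rtrancl_into_trancl2)
qed

lemma path_Cons: "is_path B (u#p) u v" if "is_path B p m v" "(u,m)\<in>B"
proof (cases p)
  case Nil then show ?thesis using that by simp
next
  case (Cons y q)
  then have "y = m" using that is_path_Cons_hd by metis
  then show ?thesis using that Cons by simp
qed

lemma rtrancl_path: "(u,v)\<in>B\<^sup>* \<Longrightarrow> \<exists>p. is_path B p u v"
proof (induction rule: converse_rtrancl_induct)
  case base then show ?case by (rule exI[of _ "[v]"]) simp
next
  case (step u m)
  then obtain p where "is_path B p m v" by blast
  then have "is_path B (u#p) u v" by (rule path_Cons[OF _ step(1)])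
  then show ?case by blast
qed

lemma trancl_path: "(u,v)\<in>B\<^sup>+ \<Longrightarrow> \<exists>p. is_path B p u v \<and> length p \<ge> 2"
proof -
  assume "(u,v)\<in>B\<^sup>+"
  then obtain m where "(u,m)\<in>B" "(m,v)\<in>B\<^sup>*" using tranclD by metis
  obtain p where "is_path B p m v" using rtrancl_path[OF \<open>(m,v)\<in>B\<^sup>*\<close>] by blast
  then have "is_path B (u#p) u v" by (rule path_Cons[OF _ \<open>(u,m)\<in>B\<close>])
  moreover have "length (u#p) \<ge> 2" using \<open>is_path B p m v\<close> by (cases p) auto
  ultimately show ?thesis by (intro exI[of _ "u#p"] conjI)
qed

lemma reach_iff: "reach B u v \<longleftrightarrow> (u,v)\<in>B\<^sup>*"
  unfolding reach_def using path_rt rtrancl_path by metis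

lemma path_sub: "is_path B p u v \<Longrightarrow> set p \<subseteq> insert u (snd ` B)"
proof (induction p arbitrary: u)
  case Nil then show ?case by simp
next
  case (Cons x p)
  show ?case
  proof (cases p)
    case Nil then show ?thesis using Cons by simp
  next
    case (Cons y q)
    with Cons.prems have h: "x = u" "(x,y)\<in>B" "is_path B (y#q) y v" by auto
    have "set p \<subseteq> insert y (snd ` B)" using Cons.IH h(3) Cons by simp
    moreover have "y \<in> snd ` B" using h(2) by force
    ultimately show ?thesis using h by auto
  qed
qed

lemma path_mono: "is_path B p u v \<Longrightarrow> B \<subseteq> B' \<Longrightarrow> is_path B' p u v"
  by (auto simp: is_path_def)

lemma path_avoid: "is_path B p u v \<Longrightarrow> w \<notin> set p \<Longrightarrow> (u,v) \<in> {(s,t)\<in>B. s\<noteq>w \<and> t\<noteq>w}\<^sup>*"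
  using path_rtrancl[of B p u v] rtrancl_mono[of "{(s,t)\<in>B. s\<in>set p \<and> t\<in>set p}" "{(s,t)\<in>B. s\<noteq>w \<and> t\<noteq>w}"]
  by blast

lemma avoid_path: "(u,v) \<in> {(s,t)\<in>B. s\<noteq>w \<and> t\<noteq>w}\<^sup>* \<Longrightarrow> u \<noteq> w \<Longrightarrow> \<exists>p. is_path B p u v \<and> w \<notin> set p"
proof -
  assume a: "(u,v) \<in> {(s,t)\<in>B. s\<noteq>w \<and> t\<noteq>w}\<^sup>*" "u \<noteq> w"
  obtain p where p: "is_path {(s,t)\<in>B. s\<noteq>w \<and> t\<noteq>w} p u v" using rtrancl_path[OF a(1)] by blast
  then have "set p \<subseteq> insert u (snd ` {(s,t)\<in>B. s\<noteq>w \<and> t\<noteq>w})" by (rule path_sub)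
  then have "w \<notin> set p" using a(2) by force
  moreover have "is_path B p u v" using p by (rule path_mono) auto
  ultimately show ?thesis by blast
qed

lemma path_len3: "is_path B p u v \<Longrightarrow> length p \<ge> 3 \<Longrightarrow> \<exists>w. (u,w)\<in>B \<and> (w,v)\<in>B\<^sup>+"
proof -
  assume a: "is_path B p u v" "length p \<ge> 3"
  obtain x p' where p1: "p = x#p'" using a(2) by (cases p) auto
  obtain y q where p2: "p' = y#q" using a(2) p1 by (cases p') auto
  have p: "p = x#y#q" "q \<noteq> []" using p1 p2 a(2) by auto
  with a have "(u,y)\<in>B" "is_path B (y#q) y v" by auto
  moreover have "length (y#q) \<ge> 2" using p by (cases q) auto
  ultimately have "(y,v)\<in>B\<^sup>+" using path_trancl by metis
  then show ?thesis using \<open>(u,y)\<in>B\<close> by blast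
qed

lemma len3_path: "(u,w)\<in>B \<Longrightarrow> (w,v)\<in>B\<^sup>+ \<Longrightarrow> \<exists>p. is_path B p u v \<and> length p \<ge> 3"
proof -
  assume a: "(u,w)\<in>B" "(w,v)\<in>B\<^sup>+"
  obtain p where p: "is_path B p w v" "length p \<ge> 2" using trancl_path[OF a(2)] by blast
  have "is_path B (u#p) u v" by (rule path_Cons[OF p(1) a(1)])
  then show ?thesis using p(2) by (intro exI[of _ "u#p"]) auto
qed

lemma shortcut_iff: "shortcut B u v \<longleftrightarrow> (u,v)\<in>B \<and> (\<exists>w. (u,w)\<in>B \<and> (w,v)\<in>B\<^sup>+)"
proof
  assume "shortcut B u v"
  then obtain p where "(u,v)\<in>B" "is_path B p u v" "length p \<ge> 3" unfolding shortcut_def by blast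
  then show "(u,v)\<in>B \<and> (\<exists>w. (u,w)\<in>B \<and> (w,v)\<in>B\<^sup>+)" using path_len3[of B p u v] by simp
next
  assume a: "(u,v)\<in>B \<and> (\<exists>w. (u,w)\<in>B \<and> (w,v)\<in>B\<^sup>+)"
  then obtain w where "(u,w)\<in>B" "(w,v)\<in>B\<^sup>+" by blast
  then obtain p where "is_path B p u v" "length p \<ge> 3" using len3_path[of u w B v] by blast
  then show "shortcut B u v" unfolding shortcut_def using a by blast
qed

lemma path_map:
  assumes "is_path B p u v" "\<forall>s\<in>set p. \<forall>t\<in>set p. (s,t)\<in>B \<longrightarrow> (f s, f t)\<in>B'"
  shows "is_path B' (map f p) (f u) (f v)"
proof -
  have ne: "p \<noteq> []" and h: "hd p = u" and l: "last p = v"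
    and e: "\<And>i. Suc i < length p \<Longrightarrow> (p!i, p!Suc i)\<in>B"
    using assms(1) unfolding is_path_def by auto
  have "(map f p ! i, map f p ! Suc i) \<in> B'" if "Suc i < length (map f p)" for i
  proof -
    have "Suc i < length p" using that by simp
    then have "p!i \<in> set p" "p!Suc i \<in> set p" "(p!i, p!Suc i)\<in>B" using e by auto
    then show ?thesis using assms(2) \<open>Suc i < length p\<close> by simp
  qed
  then show ?thesis unfolding is_path_def using ne h l by (simp add: hd_map last_map)
qed

lemma interior_Cons:
  "(\<forall>i. 0<i \<and> i<length (u#y#q) - 1 \<longrightarrow> P ((u#y#q)!i)) \<longleftrightarrow>
   (q\<noteq>[] \<longrightarrow> P y) \<and> (\<forall>i. 0<i \<and> i<length (y#q) - 1 \<longrightarrow> P ((y#q)!i))"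
proof
  assume H: "\<forall>i. 0<i \<and> i<length (u#y#q) - 1 \<longrightarrow> P ((u#y#q)!i)"
  show "(q\<noteq>[] \<longrightarrow> P y) \<and> (\<forall>i. 0<i \<and> i<length (y#q) - 1 \<longrightarrow> P ((y#q)!i))"
  proof (intro conjI impI allI)
    assume "q \<noteq> []" then show "P y" using H[rule_format, of 1] by simp
  next
    fix i assume "0<i \<and> i<length (y#q) - 1"
    then show "P ((y#q)!i)" using H[rule_format, of "Suc i"] by simp
  qed
next
  assume H: "(q\<noteq>[] \<longrightarrow> P y) \<and> (\<forall>i. 0<i \<and> i<length (y#q) - 1 \<longrightarrow> P ((y#q)!i))"
  show "\<forall>i. 0<i \<and> i<length (u#y#q) - 1 \<longrightarrow> P ((u#y#q)!i)"
  proof (intro allI impI)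
    fix i assume i: "0<i \<and> i<length (u#y#q) - 1"
    then obtain j where j: "i = Suc j" by (cases i) auto
    show "P ((u#y#q)!i)"
    proof (cases j)
      case 0 then show ?thesis using H i j by auto
    next
      case (Suc k) then show ?thesis using H[THEN conjunct2, rule_format, of j] i j by auto
    qed
  qed
qed

lemma interior_iff:
  "(\<exists>p. is_path C p u w \<and> length p \<ge> 2 \<and> (\<forall>i. 0<i \<and> i<length p - 1 \<longrightarrow> P (p!i)))
   \<longleftrightarrow> (u,w) \<in> {(a,b)\<in>C. P b}\<^sup>* O C"
proof
  have main: "is_path C p u w \<Longrightarrow> length p \<ge> 2 \<Longrightarrow> (\<forall>i. 0<i \<and> i<length p - 1 \<longrightarrow> P (p!i))
     \<Longrightarrow> (u,w) \<in> {(a,b)\<in>C. P b}\<^sup>* O C" for p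
  proof (induction p arbitrary: u)
    case Nil then show ?case by simp
  next
    case (Cons x p)
    then obtain y q where p: "p = y#q" by (cases p) auto
    have h: "x = u" "(u,y)\<in>C" "is_path C (y#q) y w" using Cons.prems(1) p by auto
    show ?case
    proof (cases "q = []")
      case True then have "y = w" using h(3) by simp
      then show ?thesis using h(2) by blast
    next
      case False
      have Py: "P y" and int: "\<forall>i. 0<i \<and> i<length (y#q) - 1 \<longrightarrow> P ((y#q)!i)"
        using Cons.prems(3) p h(1) False interior_Cons[of x y q P] by auto
      have "length (y#q) \<ge> 2" using False by (cases q) auto
      then have "(y,w) \<in> {(a,b)\<in>C. P b}\<^sup>* O C" using Cons.IH[of y] h(3) int p by simp
      then obtain m where "(y,m)\<in>{(a,b)\<in>C. P b}\<^sup>*" "(m,w)\<in>C" by blast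
      moreover have "(u,y) \<in> {(a,b)\<in>C. P b}" using h(2) Py by simp
      ultimately show ?thesis by (meson converse_rtrancl_into_rtrancl relcomp.relcompI)
    qed
  qed
  assume "\<exists>p. is_path C p u w \<and> length p \<ge> 2 \<and> (\<forall>i. 0<i \<and> i<length p - 1 \<longrightarrow> P (p!i))"
  then obtain p where "is_path C p u w" "length p \<ge> 2" "\<forall>i. 0<i \<and> i<length p - 1 \<longrightarrow> P (p!i)"
    by blast
  then show "(u,w) \<in> {(a,b)\<in>C. P b}\<^sup>* O C" by (rule main)
next
  assume "(u,w) \<in> {(a,b)\<in>C. P b}\<^sup>* O C"
  then obtain m where m: "(u,m) \<in> {(a,b)\<in>C. P b}\<^sup>*" "(m,w)\<in>C" by blast
  show "\<exists>p. is_path C p u w \<and> length p \<ge> 2 \<and> (\<forall>i. 0<i \<and> i<length p - 1 \<longrightarrow> P (p!i))"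
    using m(1)
  proof (induction rule: converse_rtrancl_induct)
    case base
    have "is_path C [m,w] m w" using m(2) by simp
    then show ?case by (intro exI[of _ "[m,w]"]) auto
  next
    case (step u u')
    then obtain p where p: "is_path C p u' w" "length p \<ge> 2" "\<forall>i. 0<i \<and> i<length p - 1 \<longrightarrow> P (p!i)"
      by blast
    obtain y p' where p1: "p = y#p'" using p(2) by (cases p) auto
    obtain z q where p2: "p' = z#q" using p(2) p1 by (cases p') auto
    have y: "y = u'" using p(1) p1 is_path_Cons_hd by metis
    have uu: "(u,u')\<in>C" "P u'" using step(1) by auto
    have np: "is_path C (u#u'#z#q) u w" using p(1) p1 p2 y uu by simp
    have ni: "\<forall>i. 0<i \<and> i<length (u#u'#z#q) - 1 \<longrightarrow> P ((u#u'#z#q)!i)"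
      using interior_Cons[of u u' "z#q" P] uu(2) p(3) p1 p2 y by simp
    show ?case by (rule exI[of _ "u#u'#z#q"]) (use np ni in simp)
  qed
qed

lemma fin_in: "finite B \<Longrightarrow> finite {u. (u,v)\<in>B}"
  by (rule finite_subset[of _ "fst ` B"]) force+

lemma fin_out: "finite B \<Longrightarrow> finite {u. (v,u)\<in>B}"
  by (rule finite_subset[of _ "snd ` B"]) force+

lemma indeg0: "finite B \<Longrightarrow> indeg B v = 0 \<longleftrightarrow> (\<forall>u. (u,v)\<notin>B)"
  unfolding indeg_def using fin_in[of B v] by simp

lemma outdeg0: "finite B \<Longrightarrow> outdeg B v = 0 \<longleftrightarrow> (\<forall>u. (v,u)\<notin>B)"
  unfolding outdeg_def using fin_out[of B v] by simp

lemma indeg1: "indeg B v = 1 \<longleftrightarrow> (\<exists>p. {u. (u,v)\<in>B} = {p})"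
  unfolding indeg_def using card_1_singleton_iff by (metis One_nat_def)

lemma outdeg1: "outdeg B v = 1 \<longleftrightarrow> (\<exists>p. {u. (v,u)\<in>B} = {p})"
  unfolding outdeg_def using card_1_singleton_iff by (metis One_nat_def)

lemma card2: "finite F \<Longrightarrow> card F \<ge> 2 \<longleftrightarrow> (\<exists>a b. a \<noteq> b \<and> a \<in> F \<and> b \<in> F)"
proof -
  assume "finite F"
  then have "card F \<le> Suc 0 \<longleftrightarrow> (\<forall>a\<in>F. \<forall>b\<in>F. a = b)" by (rule card_le_Suc0_iff_eq)
  then show ?thesis by auto
qed

lemma indeg2: "finite B \<Longrightarrow> indeg B v \<ge> 2 \<longleftrightarrow> (\<exists>a b. a\<noteq>b \<and> (a,v)\<in>B \<and> (b,v)\<in>B)"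
  unfolding indeg_def using card2[OF fin_in[of B v]] by simp

lemma outdeg2: "finite B \<Longrightarrow> outdeg B v \<ge> 2 \<longleftrightarrow> (\<exists>a b. a\<noteq>b \<and> (v,a)\<in>B \<and> (v,b)\<in>B)"
  unfolding outdeg_def using card2[OF fin_out[of B v]] by simp

locale pn =
  fixes X V :: "'v set" and A :: "('v \<times> 'v) set"
  assumes pn: "phylo_network X V A"
begin

definition "r = root V A"
definition "W = Vvis X V A"
definition "Av v = {(s,t)\<in>A. s\<noteq>v \<and> t\<noteq>v}"
definition "dm v x \<longleftrightarrow> (\<forall>p. is_path A p r x \<longrightarrow> v \<in> set p)"

lemma finV: "finite V" and Asub: "A \<subseteq> V \<times> V"
  and acyc0: "\<And>v p. is_path A p v v \<Longrightarrow> length p = 1"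
  and ex1r: "\<exists>!r. r \<in> V \<and> indeg A r = 0"
  and degs: "\<And>v. v\<in>V \<Longrightarrow> indeg A v \<noteq> 0 \<Longrightarrow>
        (indeg A v = 1 \<and> outdeg A v = 0) \<or>
        (indeg A v = 1 \<and> outdeg A v \<ge> 2) \<or>
        (outdeg A v = 1 \<and> indeg A v \<ge> 2)"
  and Xdef: "X = {v \<in> V. indeg A v = 1 \<and> outdeg A v = 0}"
  using pn unfolding phylo_network_def by auto

lemma finA: "finite A"
  using finV Asub by (meson finite_SigmaI finite_subset)

lemma arcV: "(u,v)\<in>A \<Longrightarrow> u\<in>V \<and> v\<in>V"
  using Asub by auto

lemma acyc: "(v,v) \<notin> A\<^sup>+"
proof
  assume "(v,v)\<in>A\<^sup>+"
  then obtain p where "is_path A p v v" "length p \<ge> 2" using trancl_path[of v v A] by blast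
  then show False using acyc0 by fastforce
qed

lemma acyclicA: "acyclic A"
  unfolding acyclic_def using acyc by blast

lemma wfA: "wf A" using finite_acyclic_wf[OF finA acyclicA] .
lemma wf_lt: "wf (A\<^sup>+)" using wf_trancl[OF wfA] .
lemma wf_gt: "wf ((A\<^sup>+)\<inverse>)"
proof -
  have "wf ((A\<inverse>)\<^sup>+)" using wf_trancl[OF finite_acyclic_wf_converse[OF finA acyclicA]] .
  then show ?thesis by (simp add: trancl_converse)
qed

lemma antisym: "(u,v)\<in>A\<^sup>* \<Longrightarrow> (v,u)\<in>A\<^sup>* \<Longrightarrow> u = v"
  using acyc by (metis rtrancl_into_trancl1 rtrancl_trancl_trancl rtranclD)

lemma lt_rt: "(u,v)\<in>A\<^sup>* \<Longrightarrow> u \<noteq> v \<Longrightarrow> (u,v)\<in>A\<^sup>+"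
  by (simp add: rtrancl_eq_or_trancl)

lemma lt_neq: "(u,v)\<in>A\<^sup>+ \<Longrightarrow> u \<noteq> v"
  using acyc by blast

lemma lt_asym: "(u,v)\<in>A\<^sup>+ \<Longrightarrow> (v,u)\<in>A\<^sup>* \<Longrightarrow> False"
  using acyc by (meson trancl_rtrancl_trancl)

lemma r_prop: "r \<in> V \<and> indeg A r = 0"
  unfolding r_def root_def using theI'[OF ex1r] .

lemma rV: "r \<in> V" using r_prop by blast

lemma r_nopar: "(u,r)\<notin>A"
  using r_prop indeg0[OF finA] by blast

lemma r_uniq: "v\<in>V \<Longrightarrow> (\<forall>u. (u,v)\<notin>A) \<Longrightarrow> v = r"
  using ex1r r_prop indeg0[OF finA] by blast

lemma r_nolt: "(u,r)\<notin>A\<^sup>+"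
  using r_nopar by (metis tranclE)

lemma r_min: "(u,r)\<in>A\<^sup>* \<Longrightarrow> u = r"
  using r_nolt lt_rt by blast

lemma r_reach: "v\<in>V \<Longrightarrow> (r,v)\<in>A\<^sup>*"
proof (induction v rule: wf_induct_rule[OF wfA])
  case (1 v)
  show ?case
  proof (cases "\<exists>u. (u,v)\<in>A")
    case True
    then obtain u where "(u,v)\<in>A" by blast
    then show ?thesis using 1 arcV by (meson rtrancl.rtrancl_into_rtrancl)
  next
    case False then show ?thesis using r_uniq 1 by blast
  qed
qed

lemma XV: "X \<subseteq> V" using Xdef by blast

lemma leaf_nochild: "x\<in>X \<Longrightarrow> (x,y)\<notin>A"
  using Xdef outdeg0[OF finA] by blast

lemma leaf_nlt: "x\<in>X \<Longrightarrow> (x,y)\<notin>A\<^sup>+"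
proof
  assume a: "x\<in>X" "(x,y)\<in>A\<^sup>+"
  obtain z where "(x,z)\<in>A" using tranclD[OF a(2)] by blast
  then show False using leaf_nochild \<open>x\<in>X\<close> by blast
qed

lemma leaf_rt: "x\<in>X \<Longrightarrow> (x,y)\<in>A\<^sup>* \<Longrightarrow> y = x"
  using leaf_nlt[of x y] lt_rt[of x y] by auto

lemma leaf_par: "x\<in>X \<Longrightarrow> \<exists>p. {u. (u,x)\<in>A} = {p}"
proof -
  assume "x\<in>X"
  then have "indeg A x = 1" using Xdef by blast
  then show ?thesis using indeg1[of A x] by simp
qed

lemma leaf_not_r: "x\<in>X \<Longrightarrow> x \<noteq> r"
proof
  assume a: "x\<in>X" "x = r"
  then have "indeg A x = 1" using Xdef by blast
  then show False using r_prop a(2) by simp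
qed

lemma sink: "v\<in>V \<Longrightarrow> (\<forall>w. (v,w)\<notin>A) \<Longrightarrow> v\<in>X \<or> v = r"
proof -
  assume a: "v\<in>V" "\<forall>w. (v,w)\<notin>A"
  show ?thesis
  proof (cases "v = r")
    case False
    then have "indeg A v \<noteq> 0" using r_uniq a(1) indeg0[OF finA] by blast
    moreover have "outdeg A v = 0" using a(2) outdeg0[OF finA] by blast
    ultimately have "indeg A v = 1" using degs[OF a(1)] by auto
    then show ?thesis using a(1) \<open>outdeg A v = 0\<close> Xdef by blast
  qed simp
qed

lemma reach_leaf: "v\<in>V \<Longrightarrow> v \<noteq> r \<Longrightarrow> \<exists>x\<in>X. (v,x)\<in>A\<^sup>*"
proof (induction v rule: wf_induct_rule[OF wf_gt])
  case (1 v)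
  show ?case
  proof (cases "\<exists>w. (v,w)\<in>A")
    case True
    then obtain w where w: "(v,w)\<in>A" by blast
    then have "w\<in>V" "w \<noteq> r" using arcV r_nopar by blast+
    moreover have "(w,v)\<in>(A\<^sup>+)\<inverse>" using w by auto
    ultimately obtain x where "x\<in>X" "(w,x)\<in>A\<^sup>*" using 1 by blast
    then show ?thesis using w by (meson converse_rtrancl_into_rtrancl)
  next
    case False then show ?thesis using sink 1 by blast
  qed
qed

lemma avoid: "(p,q)\<in>A\<^sup>* \<Longrightarrow> \<not>((p,a)\<in>A\<^sup>* \<and> (a,q)\<in>A\<^sup>*) \<Longrightarrow> (p,q)\<in>(Av a)\<^sup>*"
proof (induction rule: rtrancl_induct)
  case base then show ?case by simp
next
  case (step m q)
  have "(p,m)\<in>(Av a)\<^sup>*" using step by (meson rtrancl.rtrancl_into_rtrancl)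
  moreover have "m \<noteq> a" using step by blast
  moreover have "q \<noteq> a"
  proof
    assume "q = a"
    then have "(p,a)\<in>A\<^sup>*" using step(1,2) by (metis rtrancl.rtrancl_into_rtrancl)
    then show False using step(4) \<open>q = a\<close> by blast
  qed
  ultimately show ?case using step(2) unfolding Av_def
    by (simp add: rtrancl.rtrancl_into_rtrancl)
qed

lemma dm_not: "dm v x \<Longrightarrow> v \<noteq> r \<Longrightarrow> x \<noteq> v \<Longrightarrow> (r,x) \<notin> (Av v)\<^sup>*"
proof
  assume a: "dm v x" "v \<noteq> r" "x \<noteq> v" "(r,x) \<in> (Av v)\<^sup>*"
  then obtain p where "is_path A p r x" "v \<notin> set p"
    using avoid_path[of r x A v] unfolding Av_def by blast
  then show False using a(1) unfolding dm_def by blast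
qed

lemma dm_le: "x\<in>X \<Longrightarrow> dm v x \<Longrightarrow> (v,x)\<in>A\<^sup>*"
proof (rule ccontr)
  assume a: "x\<in>X" "dm v x" "(v,x)\<notin>A\<^sup>*"
  have "(r,x)\<in>A\<^sup>*" using r_reach XV a(1) by blast
  then have "(r,x)\<in>(Av v)\<^sup>*" using avoid a(3) by blast
  moreover have "v \<noteq> r" using a(3) \<open>(r,x)\<in>A\<^sup>*\<close> by blast
  moreover have "x \<noteq> v" using a(3) by blast
  ultimately show False using dm_not a(2) by blast
qed

lemma dm_cmp: "x\<in>X \<Longrightarrow> dm v x \<Longrightarrow> u\<in>V \<Longrightarrow> (u,x)\<in>A\<^sup>* \<Longrightarrow> (u,v)\<in>A\<^sup>* \<or> (v,u)\<in>A\<^sup>*"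
proof (rule ccontr)
  assume a: "x\<in>X" "dm v x" "u\<in>V" "(u,x)\<in>A\<^sup>*" "\<not>((u,v)\<in>A\<^sup>* \<or> (v,u)\<in>A\<^sup>*)"
  have "(r,u)\<in>(Av v)\<^sup>*" using avoid[OF r_reach[OF a(3)]] a(5) by blast
  moreover have "(u,x)\<in>(Av v)\<^sup>*" using avoid[OF a(4)] a(5) by blast
  ultimately have "(r,x)\<in>(Av v)\<^sup>*" by simp
  moreover have "v \<noteq> r" using a(5) r_reach[OF a(3)] by blast
  moreover have "x \<noteq> v" using a(5) a(4) by blast
  ultimately show False using dm_not a(2) by blast
qed

lemma dm_self: "dm x x"
  unfolding dm_def is_path_def by auto

lemma vis_iff: "v\<in>W \<longleftrightarrow> v\<in>V \<and> (v = r \<or> (\<exists>x\<in>X. dm v x))"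
  unfolding W_def Vvis_def visible_def dm_def[abs_def] r_def[symmetric]
  using dm_self unfolding dm_def by blast

lemma WV: "W \<subseteq> V" using vis_iff by blast
lemma rW: "r \<in> W" using vis_iff rV by blast
lemma XW: "X \<subseteq> W" using vis_iff dm_self XV by blast

lemma vis_dm: "v\<in>W \<Longrightarrow> v \<noteq> r \<Longrightarrow> \<exists>x\<in>X. dm v x"
  using vis_iff by blast

lemma dm_parent: "dm v x \<Longrightarrow> v \<noteq> r \<Longrightarrow> {u. (u,v)\<in>A} = {p} \<Longrightarrow> dm p x"
  unfolding dm_def
proof (intro allI impI)
  fix q assume a: "\<forall>p. is_path A p r x \<longrightarrow> v \<in> set p" "v \<noteq> r" "{u. (u,v)\<in>A} = {p}"
    "is_path A q r x"
  then have "v \<in> set q" by blast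
  then obtain i where i: "i < length q" "q!i = v" by (meson in_set_conv_nth)
  have "q!0 = r" using a(4) unfolding is_path_def by (metis hd_conv_nth)
  then obtain j where j: "i = Suc j" using i a(2) by (cases i) auto
  then have "(q!j, v)\<in>A" using a(4) i unfolding is_path_def by auto
  then have "q!j = p" using a(3) by blast
  then show "p \<in> set q" using i j by (metis Suc_lessD nth_mem)
qed

lemma dm_child: "dm v x \<Longrightarrow> v \<noteq> x \<Longrightarrow> {w. (v,w)\<in>A} = {c} \<Longrightarrow> dm c x"
  unfolding dm_def
proof (intro allI impI)
  fix q assume a: "\<forall>p. is_path A p r x \<longrightarrow> v \<in> set p" "v \<noteq> x" "{w. (v,w)\<in>A} = {c}"
    "is_path A q r x"
  then have "v \<in> set q" by blast
  then obtain i where i: "i < length q" "q!i = v" by (meson in_set_conv_nth)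
  have ne: "q \<noteq> []" and "last q = x" using a(4) unfolding is_path_def by auto
  then have "q!(length q - 1) = x" by (simp add: last_conv_nth)
  then have "Suc i < length q" using i a(2) by (metis Suc_lessI diff_Suc_1)
  then have "(v, q!Suc i)\<in>A" using a(4) i unfolding is_path_def by auto
  then have "q!Suc i = c" using a(3) by blast
  then show "c \<in> set q" using \<open>Suc i < length q\<close> by (metis nth_mem)
qed

end

context pn begin

definition "C = cov_A X V A"
definition "S = {v. subdividing C v}"
definition "Cb = {(a,b)\<in>C. b\<in>S}"
definition "Cf = {(a,b)\<in>C. a\<in>S}"
abbreviation "Vn \<equiv> norm_V X V A"
abbreviation "An \<equiv> norm_A X V A"

lemma C_iff: "(u,v)\<in>C \<longleftrightarrow> u\<in>W \<and> v\<in>W \<and> (u,v)\<in>A\<^sup>+ \<and> \<not>(\<exists>w\<in>W. (u,w)\<in>A\<^sup>+ \<and> (w,v)\<in>A\<^sup>+)"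
proof -
  define R where "R = {(u,v). u\<in>W \<and> v\<in>W \<and> (u,v)\<in>A\<^sup>+}"
  have R_eq: "{(u, v). u \<in> Vvis X V A \<and> v \<in> Vvis X V A \<and> u \<noteq> v \<and> reach A u v} = R"
    unfolding R_def W_def reach_iff by (auto simp: rtrancl_eq_or_trancl dest: lt_neq)
  have trR: "trans R" unfolding R_def trans_def by (auto intro: trancl_trans)
  have RR: "R\<^sup>+ = R" using trancl_id[OF trR] .
  have sc: "\<And>u v. shortcut R u v \<longleftrightarrow> (u,v)\<in>R \<and> (\<exists>w. (u,w)\<in>R \<and> (w,v)\<in>R)"
    by (simp add: shortcut_iff RR)
  show ?thesis unfolding C_def cov_A_def Let_def R_eq using sc by (auto simp: R_def)
qed

lemma C_W: "(u,v)\<in>C \<Longrightarrow> u\<in>W \<and> v\<in>W" using C_iff by blast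
lemma C_lt: "(u,v)\<in>C \<Longrightarrow> (u,v)\<in>A\<^sup>+" using C_iff by blast

lemma Ct_lt: "(u,v)\<in>C\<^sup>+ \<Longrightarrow> (u,v)\<in>A\<^sup>+"
proof (induction rule: trancl_induct)
  case (base y) then show ?case by (rule C_lt)
next
  case (step y z) then show ?case using C_lt[OF step(2)] by (meson trancl_trans)
qed

lemma Cr_le: "(u,v)\<in>C\<^sup>* \<Longrightarrow> (u,v)\<in>A\<^sup>*"
  using Ct_lt by (metis rtrancl_eq_or_trancl trancl_into_rtrancl)

lemma finW: "finite W" using WV finV finite_subset by blast
lemma finC: "finite C"
proof -
  have "C \<subseteq> W \<times> W" using C_W by auto
  then show ?thesis using finW by (meson finite_SigmaI finite_subset)
qed

lemma CT: "u\<in>W \<Longrightarrow> w\<in>W \<Longrightarrow> (u,w)\<in>A\<^sup>+ \<Longrightarrow> (u,w)\<in>C\<^sup>+"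
proof (induction w rule: wf_induct_rule[OF wf_lt])
  case (1 w)
  define Q where "Q = {z\<in>W. (u,z)\<in>A\<^sup>* \<and> (z,w)\<in>A\<^sup>+}"
  have "u\<in>Q" using 1 by (simp add: Q_def)
  then obtain z where zQ: "z\<in>Q" and zmax: "\<And>y. (y,z)\<in>(A\<^sup>+)\<inverse> \<Longrightarrow> y\<notin>Q"
    using wfE_min[OF wf_gt] by metis
  have zW: "z\<in>W" "(u,z)\<in>A\<^sup>*" "(z,w)\<in>A\<^sup>+" using zQ Q_def by auto
  have zw: "(z,w)\<in>C"
    unfolding C_iff
  proof (intro conjI)
    show "\<not>(\<exists>y\<in>W. (z,y)\<in>A\<^sup>+ \<and> (y,w)\<in>A\<^sup>+)"
    proof
      assume "\<exists>y\<in>W. (z,y)\<in>A\<^sup>+ \<and> (y,w)\<in>A\<^sup>+"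
      then obtain y where y: "y\<in>W" "(z,y)\<in>A\<^sup>+" "(y,w)\<in>A\<^sup>+" by blast
      have "(u,y)\<in>A\<^sup>*" using zW(2) y(2) by (meson rtrancl_trans trancl_into_rtrancl)
      then have "y\<in>Q" using y Q_def by blast
      moreover have "(y,z)\<in>(A\<^sup>+)\<inverse>" using y(2) by simp
      ultimately show False using zmax by blast
    qed
  qed (use zW 1 in auto)
  show ?case
  proof (cases "z = u")
    case True then show ?thesis using zw by blast
  next
    case False
    then have "(u,z)\<in>A\<^sup>+" using zW(2) lt_rt by blast
    then have "(u,z)\<in>C\<^sup>+" using 1 zW by blast
    then show ?thesis using zw by (meson trancl.trancl_into_trancl)
  qed
qed

lemma CR: "(u,r)\<notin>C" using C_lt r_nolt by blast

lemma CP: "v\<in>W \<Longrightarrow> v\<noteq>r \<Longrightarrow> \<exists>u. (u,v)\<in>C"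
proof -
  assume a: "v\<in>W" "v\<noteq>r"
  have "(r,v)\<in>A\<^sup>+" using r_reach[of v] a WV lt_rt by blast
  then have "(r,v)\<in>C\<^sup>+" using CT rW a(1) by blast
  then show ?thesis using tranclD2[of r v C] by blast
qed

lemma Cleaf: "x\<in>X \<Longrightarrow> (x,y)\<notin>C" using C_lt leaf_nlt by blast

lemma Cchild: "v\<in>W \<Longrightarrow> v\<noteq>r \<Longrightarrow> v\<notin>X \<Longrightarrow> \<exists>c. (v,c)\<in>C"
proof -
  assume a: "v\<in>W" "v\<noteq>r" "v\<notin>X"
  obtain x where x: "x\<in>X" "(v,x)\<in>A\<^sup>*" using reach_leaf[of v] a WV by blast
  then have "(v,x)\<in>A\<^sup>+" using lt_rt a(3) by blast
  then have "(v,x)\<in>C\<^sup>+" using CT a(1) XW x(1) by blast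
  then show ?thesis using tranclD[of v x C] by blast
qed

lemma UP: "v\<in>W \<Longrightarrow> v\<noteq>r \<Longrightarrow> {u. (u,v)\<in>A} = {p} \<Longrightarrow> {u. (u,v)\<in>C} = {p}"
proof -
  assume a: "v\<in>W" "v\<noteq>r" "{u. (u,v)\<in>A} = {p}"
  obtain x where x: "x\<in>X" "dm v x" using vis_dm a by blast
  have "dm p x" using dm_parent[OF x(2) a(2) a(3)] .
  moreover have pv: "(p,v)\<in>A" using a(3) by blast
  ultimately have pW: "p\<in>W" using vis_iff arcV x(1) by blast
  have below: "(w,p)\<in>A\<^sup>*" if h: "(w,v)\<in>A\<^sup>+" for w
  proof -
    obtain z where z: "(w,z)\<in>A\<^sup>*" "(z,v)\<in>A" using tranclD2[OF h] by blast
    then have "z \<in> {u. (u,v)\<in>A}" by simp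
    then have "z = p" using a(3) by simp
    then show ?thesis using z by simp
  qed
  have pvC: "(p,v)\<in>C"
    unfolding C_iff
  proof (intro conjI)
    show "\<not>(\<exists>w\<in>W. (p,w)\<in>A\<^sup>+ \<and> (w,v)\<in>A\<^sup>+)"
      using below lt_asym by blast
  qed (use pW a(1) pv in auto)
  have "u = p" if "(u,v)\<in>C" for u
  proof (rule ccontr)
    assume "u \<noteq> p"
    have "(u,v)\<in>A\<^sup>+" "u\<in>W" using that C_iff by auto
    then have "(u,p)\<in>A\<^sup>+" using below lt_rt \<open>u\<noteq>p\<close> by blast
    then show False using that pW pv C_iff by blast
  qed
  then show ?thesis using pvC by blast
qed

lemma UC: "v\<in>W \<Longrightarrow> v\<noteq>r \<Longrightarrow> v\<notin>X \<Longrightarrow> {w. (v,w)\<in>A} = {c} \<Longrightarrow> {w. (v,w)\<in>C} = {c}"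
proof -
  assume a: "v\<in>W" "v\<noteq>r" "v\<notin>X" "{w. (v,w)\<in>A} = {c}"
  obtain x where x: "x\<in>X" "dm v x" using vis_dm a by blast
  have "v \<noteq> x" using a(3) x(1) by blast
  have "dm c x" using dm_child[OF x(2) \<open>v\<noteq>x\<close> a(4)] .
  moreover have vc: "(v,c)\<in>A" using a(4) by blast
  ultimately have cW: "c\<in>W" using vis_iff arcV x(1) by blast
  have above: "(c,w)\<in>A\<^sup>*" if h: "(v,w)\<in>A\<^sup>+" for w
  proof -
    obtain z where z: "(v,z)\<in>A" "(z,w)\<in>A\<^sup>*" using tranclD[OF h] by blast
    then have "z \<in> {w. (v,w)\<in>A}" by simp
    then have "z = c" using a(4) by simp
    then show ?thesis using z by simp
  qed
  have vcC: "(v,c)\<in>C"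
    unfolding C_iff
  proof (intro conjI)
    show "\<not>(\<exists>w\<in>W. (v,w)\<in>A\<^sup>+ \<and> (w,c)\<in>A\<^sup>+)"
      using above lt_asym by blast
  qed (use cW a(1) vc in auto)
  have "w = c" if "(v,w)\<in>C" for w
  proof (rule ccontr)
    assume "w \<noteq> c"
    have "(v,w)\<in>A\<^sup>+" "w\<in>W" using that C_iff by auto
    then have "(c,w)\<in>A\<^sup>+" using above lt_rt \<open>w\<noteq>c\<close> by blast
    then show False using that cW vc C_iff by blast
  qed
  then show ?thesis using vcC by blast
qed

lemma C3: "v\<in>W \<Longrightarrow> v\<noteq>r \<Longrightarrow> v\<notin>X \<Longrightarrow> indeg C v = 1 \<or> outdeg C v = 1"
proof -
  assume a: "v\<in>W" "v\<noteq>r" "v\<notin>X"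
  have vV: "v\<in>V" using a WV by blast
  have "indeg A v \<noteq> 0"
  proof
    assume "indeg A v = 0"
    then have "\<forall>u. (u,v)\<notin>A" using indeg0[OF finA] by blast
    then show False using r_uniq vV a(2) by blast
  qed
  then have d: "(indeg A v = 1 \<and> outdeg A v = 0) \<or> (indeg A v = 1 \<and> outdeg A v \<ge> 2) \<or>
        (outdeg A v = 1 \<and> indeg A v \<ge> 2)" using degs[OF vV] by blast
  have "\<not>(indeg A v = 1 \<and> outdeg A v = 0)" using a(3) vV Xdef by blast
  then have "indeg A v = 1 \<or> outdeg A v = 1" using d by blast
  then show ?thesis
  proof
    assume "indeg A v = 1"
    then obtain p where "{u. (u,v)\<in>A} = {p}" using indeg1[of A v] by blast
    then have "{u. (u,v)\<in>C} = {p}" using UP a by blast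
    then show ?thesis unfolding indeg_def by simp
  next
    assume "outdeg A v = 1"
    then obtain c where "{u. (v,u)\<in>A} = {c}" using outdeg1[of A v] by blast
    then have "{u. (v,u)\<in>C} = {c}" using UC a by blast
    then show ?thesis unfolding outdeg_def by simp
  qed
qed

lemma CX: "x\<in>X \<Longrightarrow> indeg C x = 1 \<and> outdeg C x = 0"
proof -
  assume a: "x\<in>X"
  obtain p where "{u. (u,x)\<in>A} = {p}" using leaf_par[OF a] by blast
  then have "{u. (u,x)\<in>C} = {p}" using UP a XW leaf_not_r by blast
  then have "indeg C x = 1" unfolding indeg_def by simp
  moreover have "outdeg C x = 0" using outdeg0[OF finC] Cleaf a by blast
  ultimately show ?thesis by blast
qed

lemma Cr0: "indeg C r = 0" using indeg0[OF finC] CR by blast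

lemma S_iff: "v\<in>S \<longleftrightarrow> indeg C v = 1 \<and> outdeg C v = 1"
  unfolding S_def subdividing_def by simp

lemma Vn_iff: "v\<in>Vn \<longleftrightarrow> v\<in>W \<and> v\<notin>S"
  unfolding norm_V_def S_def C_def W_def by simp

lemma S_par: "s\<in>S \<Longrightarrow> \<exists>p. {u. (u,s)\<in>C} = {p}"
  using S_iff indeg1 by metis
lemma S_chi: "s\<in>S \<Longrightarrow> \<exists>c. {u. (s,u)\<in>C} = {c}"
  using S_iff outdeg1 by metis
lemma S_par_uniq: "s\<in>S \<Longrightarrow> (a,s)\<in>C \<Longrightarrow> (b,s)\<in>C \<Longrightarrow> a = b"
proof -
  assume h: "s\<in>S" "(a,s)\<in>C" "(b,s)\<in>C"
  obtain p where p: "{u. (u,s)\<in>C} = {p}" using S_par[OF h(1)] by blast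
  have "a \<in> {u. (u,s)\<in>C}" "b \<in> {u. (u,s)\<in>C}" using h by auto
  then show ?thesis using p by simp
qed
lemma S_chi_uniq: "s\<in>S \<Longrightarrow> (s,a)\<in>C \<Longrightarrow> (s,b)\<in>C \<Longrightarrow> a = b"
proof -
  assume h: "s\<in>S" "(s,a)\<in>C" "(s,b)\<in>C"
  obtain p where p: "{u. (s,u)\<in>C} = {p}" using S_chi[OF h(1)] by blast
  have "a \<in> {u. (s,u)\<in>C}" "b \<in> {u. (s,u)\<in>C}" using h by auto
  then show ?thesis using p by simp
qed
lemma SW: "s\<in>S \<Longrightarrow> s\<in>W"
  using S_par C_W by blast
lemma S_not_leaf: "s\<in>S \<Longrightarrow> s\<notin>X" using S_iff CX by fastforce
lemma S_not_r: "s\<in>S \<Longrightarrow> s\<noteq>r" using S_iff Cr0 by fastforce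
lemma rVn: "r\<in>Vn" using Vn_iff rW S_not_r by blast
lemma XVn: "X \<subseteq> Vn" using Vn_iff XW S_not_leaf by blast
lemma VnW: "Vn \<subseteq> W" using Vn_iff by blast

lemma An_iff: "(u,w)\<in>An \<longleftrightarrow> u\<in>Vn \<and> w\<in>Vn \<and> (u,w)\<in>Cb\<^sup>* O C"
proof -
  have "Cb = {(a,b)\<in>C. subdividing C b}" unfolding Cb_def S_def by simp
  then show ?thesis
    unfolding norm_A_def C_def[symmetric] using interior_iff[of C u w "subdividing C"] by simp
qed

lemma Cb_C: "Cb \<subseteq> C" unfolding Cb_def by blast
lemma Cf_C: "Cf \<subseteq> C" unfolding Cf_def by blast
lemma Cbr: "(u,v)\<in>Cb\<^sup>* \<Longrightarrow> (u,v)\<in>C\<^sup>*" using rtrancl_mono[OF Cb_C] by blast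
lemma Cfr: "(u,v)\<in>Cf\<^sup>* \<Longrightarrow> (u,v)\<in>C\<^sup>*" using rtrancl_mono[OF Cf_C] by blast

lemma Cb_Cf1: "(u,m)\<in>Cb\<^sup>* \<Longrightarrow> (m,w)\<in>C \<Longrightarrow> (u,w)\<in>C O Cf\<^sup>*"
proof (induction m arbitrary: w rule: rtrancl_induct)
  case base then show ?case by blast
next
  case (step m m' w)
  have "(m,m')\<in>C" "m'\<in>S" using step(2) Cb_def by auto
  then obtain t where "(u,t)\<in>C" "(t,m')\<in>Cf\<^sup>*" using step.IH by blast
  moreover have "(m',w)\<in>Cf" using step.prems \<open>m'\<in>S\<close> Cf_def by auto
  ultimately show ?case by (meson relcompI rtrancl.rtrancl_into_rtrancl)
qed

lemma Cb_Cf2: "(t,w)\<in>Cf\<^sup>* \<Longrightarrow> (u,t)\<in>C \<Longrightarrow> (u,w)\<in>Cb\<^sup>* O C"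
proof (induction t arbitrary: u rule: converse_rtrancl_induct)
  case base then show ?case by blast
next
  case (step t t' u)
  have "(t,t')\<in>C" "t\<in>S" using step(1) Cf_def by auto
  then have "(u,t)\<in>Cb" using step.prems Cb_def by auto
  obtain m where "(t,m)\<in>Cb\<^sup>*" "(m,w)\<in>C" using step.IH[OF \<open>(t,t')\<in>C\<close>] by blast
  then show ?case using \<open>(u,t)\<in>Cb\<close> by (meson relcompI converse_rtrancl_into_rtrancl)
qed

lemma An_iff2: "(u,w)\<in>An \<longleftrightarrow> u\<in>Vn \<and> w\<in>Vn \<and> (u,w)\<in>C O Cf\<^sup>*"
  unfolding An_iff using Cb_Cf1 Cb_Cf2 by blast

lemma Cb_last: "(u,v)\<in>Cb\<^sup>* \<Longrightarrow> v\<notin>S \<Longrightarrow> u = v"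
  by (erule rtranclE) (auto simp: Cb_def)

lemma Cf_first: "(u,v)\<in>Cf\<^sup>* \<Longrightarrow> u\<notin>S \<Longrightarrow> u = v"
  by (erule converse_rtranclE) (auto simp: Cf_def)

lemma Cb_cmp: "(u,a)\<in>Cb\<^sup>* \<Longrightarrow> (u',a)\<in>Cb\<^sup>* \<Longrightarrow> (u,u')\<in>Cb\<^sup>* \<or> (u',u)\<in>Cb\<^sup>*"
proof (induction a rule: rtrancl_induct)
  case base then show ?case by blast
next
  case (step b a)
  from step.prems show ?case
  proof (cases rule: rtranclE)
    case base then show ?thesis using step(1,2) by (meson rtrancl.rtrancl_into_rtrancl)
  next
    case (step b')
    have "b' = b" using S_par_uniq step(2) \<open>(b,a)\<in>Cb\<close> unfolding Cb_def by blast
    then show ?thesis using \<open>(u', b') \<in> Cb\<^sup>*\<close> \<open>(u', b) \<in> Cb\<^sup>* \<Longrightarrow> _\<close> by blast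
  qed
qed

end

context pn begin

lemma Cf_cmp: "(c,w)\<in>Cf\<^sup>* \<Longrightarrow> (c,w')\<in>Cf\<^sup>* \<Longrightarrow> (w,w')\<in>Cf\<^sup>* \<or> (w',w)\<in>Cf\<^sup>*"
proof (induction c rule: converse_rtrancl_induct)
  case base then show ?case by blast
next
  case (step c c')
  note s1 = step(1) and s2 = step(2) and IH = step.IH
  from step.prems show ?case
  proof (cases rule: converse_rtranclE)
    case base then show ?thesis using s1 s2 by (meson converse_rtrancl_into_rtrancl)
  next
    case (step c'')
    have "c\<in>S" "(c,c')\<in>C" "(c,c'')\<in>C" using s1 step(1) unfolding Cf_def by auto
    then have "c'' = c'" using S_chi_uniq by blast
    then show ?thesis using IH step(2) by blast
  qed
qed

lemma FwdL: "(c,w)\<in>Cf\<^sup>* \<Longrightarrow> (c,x)\<in>C\<^sup>* \<Longrightarrow> (w,x)\<in>C\<^sup>* \<or> (x,w)\<in>Cf\<^sup>*"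
proof (induction c rule: converse_rtrancl_induct)
  case base then show ?case by blast
next
  case (step c c')
  note s1 = step(1) and s2 = step(2) and IH = step.IH
  from step.prems show ?case
  proof (cases rule: converse_rtranclE)
    case base then show ?thesis using s1 s2 by (meson converse_rtrancl_into_rtrancl)
  next
    case (step c'')
    have "c\<in>S" "(c,c')\<in>C" "(c,c'')\<in>C" using s1 step(1) unfolding Cf_def by auto
    then have "c'' = c'" using S_chi_uniq by blast
    then show ?thesis using IH step(2) by blast
  qed
qed

lemma Uniq_back: "(u,a)\<in>Cb\<^sup>* \<Longrightarrow> (u',a)\<in>Cb\<^sup>* \<Longrightarrow> u\<notin>S \<Longrightarrow> u'\<notin>S \<Longrightarrow> u = u'"
  using Cb_cmp Cb_last by metis

lemma Uniq_fwd: "(c,w)\<in>Cf\<^sup>* \<Longrightarrow> (c,w')\<in>Cf\<^sup>* \<Longrightarrow> w\<notin>S \<Longrightarrow> w'\<notin>S \<Longrightarrow> w = w'"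
  using Cf_cmp Cf_first by metis

lemma Ex_back: "a\<in>W \<Longrightarrow> \<exists>u. u\<in>Vn \<and> (u,a)\<in>Cb\<^sup>*"
proof (induction a rule: wf_induct_rule[OF wf_lt])
  case (1 a)
  show ?case
  proof (cases "a\<in>S")
    case False then show ?thesis using 1(2) Vn_iff by blast
  next
    case True
    obtain b where b: "{u. (u,a)\<in>C} = {b}" using S_par[OF True] by blast
    then have ba: "(b,a)\<in>C" by blast
    then have "b\<in>W" "(b,a)\<in>A\<^sup>+" using C_W C_lt by blast+
    then obtain u where "u\<in>Vn" "(u,b)\<in>Cb\<^sup>*" using 1(1) by blast
    moreover have "(b,a)\<in>Cb" using ba True Cb_def by blast
    ultimately show ?thesis by (meson rtrancl.rtrancl_into_rtrancl)
  qed
qed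

lemma Ex_fwd: "a\<in>W \<Longrightarrow> \<exists>w. w\<in>Vn \<and> (a,w)\<in>Cf\<^sup>*"
proof (induction a rule: wf_induct_rule[OF wf_gt])
  case (1 a)
  show ?case
  proof (cases "a\<in>S")
    case False then show ?thesis using 1(2) Vn_iff by blast
  next
    case True
    obtain c where c: "{u. (a,u)\<in>C} = {c}" using S_chi[OF True] by blast
    then have ac: "(a,c)\<in>C" by blast
    then have "c\<in>W" "(c,a)\<in>(A\<^sup>+)\<inverse>" using C_W C_lt by blast+
    then obtain w where "w\<in>Vn" "(c,w)\<in>Cf\<^sup>*" using 1(1) by blast
    moreover have "(a,c)\<in>Cf" using ac True Cf_def by blast
    ultimately show ?thesis by (meson converse_rtrancl_into_rtrancl)
  qed
qed

lemma rt3: "(a,b)\<in>R\<^sup>* \<Longrightarrow> (b,c)\<in>R\<^sup>* \<Longrightarrow> (c,d)\<in>R\<^sup>* \<Longrightarrow> (d,e)\<in>R\<^sup>* \<Longrightarrow> (a,e)\<in>R\<^sup>*"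
  by (meson rtrancl_trans)

lemma InjB: "a\<in>S \<Longrightarrow> (a,v)\<in>C \<Longrightarrow> (b,v)\<in>C \<Longrightarrow> a\<noteq>b \<Longrightarrow> (u,a)\<in>Cb\<^sup>* \<Longrightarrow> (u,b)\<in>Cb\<^sup>* \<Longrightarrow> u\<in>Vn \<Longrightarrow> False"
proof -
  assume h: "a\<in>S" "(a,v)\<in>C" "(b,v)\<in>C" "a\<noteq>b" "(u,a)\<in>Cb\<^sup>*" "(u,b)\<in>Cb\<^sup>*" "u\<in>Vn"
  have uW: "u\<in>W" "u\<notin>S" using h(7) Vn_iff by auto
  have "u\<noteq>a" using h(1) uW by blast
  have ua: "(u,a)\<in>A\<^sup>+" using Cr_le[OF Cbr[OF h(5)]] lt_rt \<open>u\<noteq>a\<close> by blast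
  have ub: "(u,b)\<in>A\<^sup>*" using Cr_le[OF Cbr[OF h(6)]] .
  have av: "(a,v)\<in>A\<^sup>+" "(b,v)\<in>A\<^sup>+" using C_lt h(2,3) by auto
  have W3: "a\<in>W" "b\<in>W" "v\<in>W" using C_W h(2,3) by auto
  have "a\<noteq>r" "a\<notin>X" using S_not_r S_not_leaf h(1) by auto
  obtain x where x: "x\<in>X" "dm a x" using vis_dm W3(1) \<open>a\<noteq>r\<close> by blast
  have "a\<noteq>x" using \<open>a\<notin>X\<close> x(1) by blast
  have "(a,x)\<in>A\<^sup>+" using dm_le[OF x(1,2)] lt_rt \<open>a\<noteq>x\<close> by blast
  then have "(a,x)\<in>C\<^sup>+" using CT W3(1) XW x(1) by blast
  then obtain c where c: "(a,c)\<in>C" "(c,x)\<in>C\<^sup>*" using tranclD[of a x C] by blast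
  then have "c = v" using S_chi_uniq h(1) h(2) by blast
  then have vx: "(v,x)\<in>A\<^sup>*" using Cr_le c(2) by blast
  have nab: "(a,b)\<notin>A\<^sup>*"
  proof
    assume "(a,b)\<in>A\<^sup>*"
    then have "(a,b)\<in>A\<^sup>+" using lt_rt h(4) by blast
    then show False using h(2) W3 av(2) C_iff by blast
  qed
  have nba: "(b,a)\<notin>A\<^sup>*"
  proof
    assume "(b,a)\<in>A\<^sup>*"
    then have "(b,a)\<in>A\<^sup>+" using lt_rt h(4) by metis
    then show False using h(3) W3 av(1) C_iff by blast
  qed
  have uV: "u\<in>V" using uW WV by blast
  have s1: "(r,u)\<in>(Av a)\<^sup>*" using avoid[OF r_reach[OF uV]] lt_asym[OF ua] by blast
  have s2: "(u,b)\<in>(Av a)\<^sup>*" using avoid[OF ub] nab by blast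
  have s3: "(b,v)\<in>(Av a)\<^sup>*" using avoid[OF trancl_into_rtrancl[OF av(2)]] nba by blast
  have s4: "(v,x)\<in>(Av a)\<^sup>*" using avoid[OF vx] lt_asym[OF av(1)] by blast
  have "(r,x)\<in>(Av a)\<^sup>*" using rt3[OF s1 s2 s3 s4] .
  then show False using dm_not[OF x(2) \<open>a\<noteq>r\<close>] \<open>a\<noteq>x\<close> by blast
qed

lemma InjF: "c\<in>S \<Longrightarrow> (v,c)\<in>C \<Longrightarrow> (v,d)\<in>C \<Longrightarrow> c\<noteq>d \<Longrightarrow> (c,w)\<in>Cf\<^sup>* \<Longrightarrow> (d,w)\<in>Cf\<^sup>* \<Longrightarrow> w\<in>Vn \<Longrightarrow> False"
proof -
  assume h: "c\<in>S" "(v,c)\<in>C" "(v,d)\<in>C" "c\<noteq>d" "(c,w)\<in>Cf\<^sup>*" "(d,w)\<in>Cf\<^sup>*" "w\<in>Vn"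
  have wW: "w\<in>W" "w\<notin>S" using h(7) Vn_iff by auto
  have "c\<noteq>w" using h(1) wW by blast
  have cw: "(c,w)\<in>A\<^sup>+" using Cr_le[OF Cfr[OF h(5)]] lt_rt \<open>c\<noteq>w\<close> by blast
  have dw: "(d,w)\<in>A\<^sup>*" using Cr_le[OF Cfr[OF h(6)]] .
  have vc: "(v,c)\<in>A\<^sup>+" "(v,d)\<in>A\<^sup>+" using C_lt h(2,3) by auto
  have W3: "c\<in>W" "d\<in>W" "v\<in>W" using C_W h(2,3) by auto
  have "c\<noteq>r" "c\<notin>X" using S_not_r S_not_leaf h(1) by auto
  obtain x where x: "x\<in>X" "dm c x" using vis_dm W3(1) \<open>c\<noteq>r\<close> by blast
  have "c\<noteq>x" using \<open>c\<notin>X\<close> x(1) by blast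
  have "(c,x)\<in>A\<^sup>+" using dm_le[OF x(1,2)] lt_rt \<open>c\<noteq>x\<close> by blast
  then have "(c,x)\<in>C\<^sup>+" using CT W3(1) XW x(1) by blast
  then have "(c,x)\<in>C\<^sup>*" by simp
  then have "(w,x)\<in>C\<^sup>* \<or> (x,w)\<in>Cf\<^sup>*" using FwdL[OF h(5)] by blast
  then have wx: "(w,x)\<in>A\<^sup>*"
  proof
    assume "(x,w)\<in>Cf\<^sup>*"
    then have "x = w" using Cf_first S_not_leaf x(1) by blast
    then show ?thesis by simp
  qed (rule Cr_le)
  have ncd: "(c,d)\<notin>A\<^sup>*"
  proof
    assume "(c,d)\<in>A\<^sup>*"
    then have "(c,d)\<in>A\<^sup>+" using lt_rt h(4) by blast
    then show False using h(3) W3 vc(1) C_iff by blast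
  qed
  have ndc: "(d,c)\<notin>A\<^sup>*"
  proof
    assume "(d,c)\<in>A\<^sup>*"
    then have "(d,c)\<in>A\<^sup>+" using lt_rt h(4) by metis
    then show False using h(2) W3 vc(2) C_iff by blast
  qed
  have vV: "v\<in>V" using W3 WV by blast
  have s1: "(r,v)\<in>(Av c)\<^sup>*" using avoid[OF r_reach[OF vV]] lt_asym[OF vc(1)] by blast
  have s2: "(v,d)\<in>(Av c)\<^sup>*" using avoid[OF trancl_into_rtrancl[OF vc(2)]] ncd by blast
  have s3: "(d,w)\<in>(Av c)\<^sup>*" using avoid[OF dw] ndc by blast
  have s4: "(w,x)\<in>(Av c)\<^sup>*" using avoid[OF wx] lt_asym[OF cw] by blast
  have "(r,x)\<in>(Av c)\<^sup>*" using rt3[OF s1 s2 s3 s4] .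
  then show False using dm_not[OF x(2) \<open>c\<noteq>r\<close>] \<open>c\<noteq>x\<close> by blast
qed

lemma K: "(a,b)\<in>An \<Longrightarrow> v\<in>Vn \<Longrightarrow> (a,v)\<in>A\<^sup>+ \<Longrightarrow> (v,b)\<in>A\<^sup>+ \<Longrightarrow> False"
proof -
  assume h: "(a,b)\<in>An" "v\<in>Vn" "(a,v)\<in>A\<^sup>+" "(v,b)\<in>A\<^sup>+"
  obtain t where t: "(a,t)\<in>C" "(t,b)\<in>Cf\<^sup>*" "a\<in>Vn" "b\<in>Vn" using h(1) An_iff2 by blast
  have vW: "v\<in>W" "v\<notin>S" using h(2) Vn_iff by auto
  show False
  proof (cases "t = b")
    case True then show False using t(1) C_iff vW h(3,4) by blast
  next
    case False
    from t(2) have "t\<in>S"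
    proof (cases rule: converse_rtranclE)
      case base then show ?thesis using False by blast
    next
      case (step t') then show ?thesis unfolding Cf_def by blast
    qed
    have tW: "t\<in>W" using C_W t(1) by blast
    have "t\<noteq>r" "t\<notin>X" using S_not_r S_not_leaf \<open>t\<in>S\<close> by auto
    obtain y where y: "y\<in>X" "dm t y" using vis_dm tW \<open>t\<noteq>r\<close> by blast
    have "t\<noteq>y" using \<open>t\<notin>X\<close> y(1) by blast
    have "(t,y)\<in>A\<^sup>+" using dm_le[OF y(1,2)] lt_rt \<open>t\<noteq>y\<close> by blast
    then have "(t,y)\<in>C\<^sup>+" using CT tW XW y(1) by blast
    then have "(t,y)\<in>C\<^sup>*" by simp
    then have "(b,y)\<in>C\<^sup>* \<or> (y,b)\<in>Cf\<^sup>*" using FwdL[OF t(2)] by blast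
    then have bY: "(b,y)\<in>A\<^sup>*"
    proof
      assume "(y,b)\<in>Cf\<^sup>*"
      then have "y = b" using Cf_first S_not_leaf y(1) by blast
      then show ?thesis by simp
    qed (rule Cr_le)
    have at: "(a,t)\<in>A\<^sup>+" using C_lt t(1) by blast
    have tb: "(t,b)\<in>A\<^sup>*" using Cr_le[OF Cfr[OF t(2)]] .
    have aV: "a\<in>V" using t(3) VnW WV by blast
    have s1: "(r,a)\<in>(Av t)\<^sup>*" using avoid[OF r_reach[OF aV]] lt_asym[OF at] by blast
    have ntv: "(t,v)\<notin>A\<^sup>*"
    proof
      assume "(t,v)\<in>A\<^sup>*"
      moreover have "t\<noteq>v" using \<open>t\<in>S\<close> vW by blast
      ultimately have "(t,v)\<in>A\<^sup>+" using lt_rt by blast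
      then have "(t,v)\<in>C\<^sup>+" using CT tW vW by blast
      then have "(t,v)\<in>C\<^sup>*" by simp
      then have "(b,v)\<in>C\<^sup>* \<or> (v,b)\<in>Cf\<^sup>*" using FwdL[OF t(2)] by blast
      then show False
      proof
        assume "(b,v)\<in>C\<^sup>*"
        then show False using Cr_le lt_asym h(4) by blast
      next
        assume "(v,b)\<in>Cf\<^sup>*"
        then have "v = b" using Cf_first vW by blast
        then show False using h(4) lt_neq by blast
      qed
    qed
    have s2: "(a,v)\<in>(Av t)\<^sup>*" using avoid[OF trancl_into_rtrancl[OF h(3)]] ntv by blast
    have nvt: "(v,t)\<notin>A\<^sup>*"
    proof
      assume "(v,t)\<in>A\<^sup>*"
      moreover have "t\<noteq>v" using \<open>t\<in>S\<close> vW by blast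
      ultimately have "(v,t)\<in>A\<^sup>+" using lt_rt by metis
      then show False using t(1) C_iff vW h(3) by blast
    qed
    have s3: "(v,b)\<in>(Av t)\<^sup>*" using avoid[OF trancl_into_rtrancl[OF h(4)]] nvt by blast
    have nbt: "(b,t)\<notin>A\<^sup>*" using antisym tb False by blast
    have s4: "(b,y)\<in>(Av t)\<^sup>*" using avoid[OF bY] nbt by blast
    have "(r,y)\<in>(Av t)\<^sup>*" using rt3[OF s1 s2 s3 s4] .
    then show False using dm_not[OF y(2) \<open>t\<noteq>r\<close>] \<open>t\<noteq>y\<close> by blast
  qed
qed

end

context pn begin

lemma An_lt: "(a,b)\<in>An \<Longrightarrow> (a,b)\<in>A\<^sup>+"
proof -
  assume "(a,b)\<in>An"
  then obtain m where "(a,m)\<in>Cb\<^sup>*" "(m,b)\<in>C" using An_iff by blast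
  then have "(a,m)\<in>A\<^sup>*" "(m,b)\<in>A\<^sup>+" using Cr_le Cbr C_lt by blast+
  then show ?thesis by (meson rtrancl_trancl_trancl)
qed

lemma An_sub: "(a,b)\<in>An \<Longrightarrow> a\<in>Vn \<and> b\<in>Vn" using An_iff by blast

lemma ChainL: "(u,v)\<in>C\<^sup>* \<Longrightarrow> u\<in>Vn \<Longrightarrow> \<exists>w. w\<in>Vn \<and> (u,w)\<in>An\<^sup>* \<and> (w,v)\<in>Cb\<^sup>*"
proof (induction v rule: rtrancl_induct)
  case base then show ?case by blast
next
  case (step v v')
  then obtain w where w: "w\<in>Vn" "(u,w)\<in>An\<^sup>*" "(w,v)\<in>Cb\<^sup>*" by blast
  show ?case
  proof (cases "v'\<in>S")
    case True
    then have "(v,v')\<in>Cb" using step(2) Cb_def by blast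
    then show ?thesis using w by (meson rtrancl.rtrancl_into_rtrancl)
  next
    case False
    then have "v'\<in>Vn" using Vn_iff C_W step(2) by blast
    moreover have "(w,v')\<in>Cb\<^sup>* O C" using w(3) step(2) by blast
    ultimately have "(w,v')\<in>An" using An_iff w(1) by blast
    then have "(u,v')\<in>An\<^sup>*" using w(2) by (meson rtrancl.rtrancl_into_rtrancl)
    then show ?thesis using \<open>v'\<in>Vn\<close> by blast
  qed
qed

lemma Anr_le: "(u,v)\<in>An\<^sup>* \<Longrightarrow> (u,v)\<in>A\<^sup>*"
proof (induction rule: rtrancl_induct)
  case (step y z) then show ?case using An_lt[OF step(2)] by (meson rtrancl_trans trancl_into_rtrancl)
qed simp

lemma reach_n: "u\<in>Vn \<Longrightarrow> v\<in>Vn \<Longrightarrow> (u,v)\<in>An\<^sup>* \<longleftrightarrow> (u,v)\<in>A\<^sup>*"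
proof
  assume a: "u\<in>Vn" "v\<in>Vn" "(u,v)\<in>A\<^sup>*"
  show "(u,v)\<in>An\<^sup>*"
  proof (cases "u = v")
    case False
    then have "(u,v)\<in>A\<^sup>+" using a(3) lt_rt by blast
    then have "(u,v)\<in>C\<^sup>+" using CT a VnW by blast
    then have "(u,v)\<in>C\<^sup>*" by simp
    then obtain w where w: "w\<in>Vn" "(u,w)\<in>An\<^sup>*" "(w,v)\<in>Cb\<^sup>*" using ChainL a(1) by blast
    have "w = v" using Cb_last[OF w(3)] a(2) Vn_iff by blast
    then show ?thesis using w(2) by simp
  qed simp
qed (rule Anr_le)

lemma DI: "v\<in>Vn \<Longrightarrow> indeg An v = indeg C v"
proof -
  assume vV: "v\<in>Vn"
  define g where "g a = (SOME u. u\<in>Vn \<and> (u,a)\<in>Cb\<^sup>*)" for a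
  have g: "g a\<in>Vn \<and> (g a,a)\<in>Cb\<^sup>*" if "a\<in>W" for a
    using someI_ex[OF Ex_back[OF that]] unfolding g_def .
  have gu: "g a = u" if "a\<in>W" "u\<in>Vn" "(u,a)\<in>Cb\<^sup>*" for a u
    using g[OF that(1)] that(2,3) Uniq_back Vn_iff by metis
  have eq: "{u. (u,v)\<in>An} = g ` {a. (a,v)\<in>C}"
  proof
    show "{u. (u,v)\<in>An} \<subseteq> g ` {a. (a,v)\<in>C}"
    proof
      fix u assume "u \<in> {u. (u,v)\<in>An}"
      then obtain m where m: "(u,m)\<in>Cb\<^sup>*" "(m,v)\<in>C" "u\<in>Vn" using An_iff by blast
      then have "g m = u" using gu C_W by blast
      then show "u \<in> g ` {a. (a,v)\<in>C}" using m(2) by blast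
    qed
  next
    show "g ` {a. (a,v)\<in>C} \<subseteq> {u. (u,v)\<in>An}"
    proof
      fix u assume "u \<in> g ` {a. (a,v)\<in>C}"
      then obtain a where a: "(a,v)\<in>C" "u = g a" by blast
      then have "u\<in>Vn" "(u,a)\<in>Cb\<^sup>*" using g C_W by blast+
      then show "u \<in> {u. (u,v)\<in>An}" using An_iff vV a(1) by blast
    qed
  qed
  have inj: "inj_on g {a. (a,v)\<in>C}"
  proof (rule inj_onI, rule ccontr)
    fix a b assume ab: "a \<in> {a. (a,v)\<in>C}" "b \<in> {a. (a,v)\<in>C}" "g a = g b" "a \<noteq> b"
    have aW: "a\<in>W" "b\<in>W" using ab C_W by auto
    have ga: "g a\<in>Vn" "(g a,a)\<in>Cb\<^sup>*" "(g a,b)\<in>Cb\<^sup>*" using g aW ab(3) by metis+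
    show False
    proof (cases "a\<in>S")
      case True then show False using InjB[of a v b "g a"] ab ga by blast
    next
      case False
      show False
      proof (cases "b\<in>S")
        case True then show False using InjB[of b v a "g a"] ab ga by blast
      next
        case False
        have "g a = a" using gu[of a a] aW \<open>a\<notin>S\<close> Vn_iff by blast
        moreover have "g b = b" using gu[of b b] aW False Vn_iff by blast
        ultimately show False using ab by simp
      qed
    qed
  qed
  show ?thesis unfolding indeg_def eq using card_image[OF inj] .
qed

lemma DO: "v\<in>Vn \<Longrightarrow> outdeg An v = outdeg C v"
proof -
  assume vV: "v\<in>Vn"
  define g where "g a = (SOME u. u\<in>Vn \<and> (a,u)\<in>Cf\<^sup>*)" for a
  have g: "g a\<in>Vn \<and> (a,g a)\<in>Cf\<^sup>*" if "a\<in>W" for a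
    using someI_ex[OF Ex_fwd[OF that]] unfolding g_def .
  have gu: "g a = u" if "a\<in>W" "u\<in>Vn" "(a,u)\<in>Cf\<^sup>*" for a u
    using g[OF that(1)] that(2,3) Uniq_fwd Vn_iff by metis
  have eq: "{u. (v,u)\<in>An} = g ` {a. (v,a)\<in>C}"
  proof
    show "{u. (v,u)\<in>An} \<subseteq> g ` {a. (v,a)\<in>C}"
    proof
      fix u assume "u \<in> {u. (v,u)\<in>An}"
      then obtain m where m: "(v,m)\<in>C" "(m,u)\<in>Cf\<^sup>*" "u\<in>Vn" using An_iff2 by blast
      then have "g m = u" using gu C_W by blast
      then show "u \<in> g ` {a. (v,a)\<in>C}" using m(1) by blast
    qed
  next
    show "g ` {a. (v,a)\<in>C} \<subseteq> {u. (v,u)\<in>An}"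
    proof
      fix u assume "u \<in> g ` {a. (v,a)\<in>C}"
      then obtain a where a: "(v,a)\<in>C" "u = g a" by blast
      then have "u\<in>Vn" "(a,u)\<in>Cf\<^sup>*" using g C_W by blast+
      then show "u \<in> {u. (v,u)\<in>An}" using An_iff2 vV a(1) by blast
    qed
  qed
  have inj: "inj_on g {a. (v,a)\<in>C}"
  proof (rule inj_onI, rule ccontr)
    fix a b assume ab: "a \<in> {a. (v,a)\<in>C}" "b \<in> {a. (v,a)\<in>C}" "g a = g b" "a \<noteq> b"
    have aW: "a\<in>W" "b\<in>W" using ab C_W by auto
    have ga: "g a\<in>Vn" "(a,g a)\<in>Cf\<^sup>*" "(b,g a)\<in>Cf\<^sup>*" using g aW ab(3) by metis+
    show False
    proof (cases "a\<in>S")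
      case True then show False using InjF[of a v b "g a"] ab ga by blast
    next
      case False
      show False
      proof (cases "b\<in>S")
        case True then show False using InjF[of b v a "g a"] ab ga by blast
      next
        case False
        have "g a = a" using gu[of a a] aW \<open>a\<notin>S\<close> Vn_iff by blast
        moreover have "g b = b" using gu[of b b] aW False Vn_iff by blast
        ultimately show False using ab by simp
      qed
    qed
  qed
  show ?thesis unfolding outdeg_def eq using card_image[OF inj] .
qed

end

context pn begin

lemma Ant_lt: "(u,v)\<in>An\<^sup>+ \<Longrightarrow> (u,v)\<in>A\<^sup>+"
proof (induction rule: trancl_induct)
  case (base y) then show ?case by (rule An_lt)
next
  case (step y z) then show ?case using An_lt[OF step(2)] by (meson trancl_trans)
qed

lemma finVn: "finite Vn"
proof -
  have "Vn \<subseteq> V" using VnW WV by blast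
  then show ?thesis using finV by (rule finite_subset)
qed
lemma finAn: "finite An"
proof -
  have "An \<subseteq> Vn \<times> Vn" using An_sub by auto
  then show ?thesis using finVn by (meson finite_SigmaI finite_subset)
qed

lemma In0: "v\<in>Vn \<Longrightarrow> indeg An v = 0 \<longleftrightarrow> v = r"
proof
  assume "v\<in>Vn" "indeg An v = 0"
  then have "indeg C v = 0" using DI by simp
  then have "\<forall>u. (u,v)\<notin>C" using indeg0[OF finC] by blast
  then show "v = r" using CP \<open>v\<in>Vn\<close> VnW by blast
next
  assume "v\<in>Vn" "v = r"
  then show "indeg An v = 0" using DI Cr0 by simp
qed

lemma Xn: "X = {v\<in>Vn. indeg An v = 1 \<and> outdeg An v = 0}"
proof
  show "X \<subseteq> {v\<in>Vn. indeg An v = 1 \<and> outdeg An v = 0}"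
    using XVn CX DI DO by auto
next
  show "{v\<in>Vn. indeg An v = 1 \<and> outdeg An v = 0} \<subseteq> X"
  proof
    fix v assume "v \<in> {v\<in>Vn. indeg An v = 1 \<and> outdeg An v = 0}"
    then have v: "v\<in>Vn" "indeg C v = 1" "outdeg C v = 0" using DI DO by auto
    show "v\<in>X"
    proof (rule ccontr)
      assume "v\<notin>X"
      have "v \<noteq> r" using v(2) Cr0 by auto
      then obtain c where "(v,c)\<in>C" using Cchild v(1) VnW \<open>v\<notin>X\<close> by blast
      then show False using v(3) outdeg0[OF finC] by blast
    qed
  qed
qed

lemma phylo_n: "phylo_network X Vn An"
  unfolding phylo_network_def
proof (intro conjI)
  show "finite Vn" by (rule finVn)
  show "An \<subseteq> Vn \<times> Vn" using An_sub by auto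
  show "\<forall>v p. is_path An p v v \<longrightarrow> length p = 1"
  proof (intro allI impI)
    fix v p assume pp: "is_path An p v v"
    show "length p = 1"
    proof (rule ccontr)
      assume "length p \<noteq> 1"
      moreover have "p \<noteq> []" using pp by (cases p) auto
      moreover have "length p > 0" using \<open>p \<noteq> []\<close> by simp
      ultimately have "length p \<ge> 2" by arith
      then have "(v,v)\<in>An\<^sup>+" by (rule path_trancl[OF pp])
      then show False using Ant_lt acyc by blast
    qed
  qed
  show "\<exists>!r. r \<in> Vn \<and> indeg An r = 0"
  proof
    show "r \<in> Vn \<and> indeg An r = 0" using rVn In0[of r] by simp
  next
    fix x assume "x \<in> Vn \<and> indeg An x = 0"
    then show "x = r" using In0[of x] by simp
  qed
  show "\<forall>v\<in>Vn. indeg An v \<noteq> 0 \<longrightarrow>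
        (indeg An v = 1 \<and> outdeg An v = 0) \<or>
        (indeg An v = 1 \<and> outdeg An v \<ge> 2) \<or>
        (outdeg An v = 1 \<and> indeg An v \<ge> 2)"
  proof (intro ballI impI)
    fix v assume v: "v\<in>Vn" "indeg An v \<noteq> 0"
    have vr: "v \<noteq> r" using In0[OF v(1)] v(2) by simp
    have vW: "v\<in>W" "v\<notin>S" using v(1) Vn_iff by auto
    have ic: "indeg An v = indeg C v" "outdeg An v = outdeg C v" using DI DO v(1) by auto
    show "(indeg An v = 1 \<and> outdeg An v = 0) \<or>
        (indeg An v = 1 \<and> outdeg An v \<ge> 2) \<or>
        (outdeg An v = 1 \<and> indeg An v \<ge> 2)"
    proof (cases "v\<in>X")
      case True then show ?thesis using CX ic by simp
    next
      case False
      obtain c where "(v,c)\<in>C" using Cchild vW(1) vr False by blast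
      then have o: "outdeg C v \<noteq> 0" using outdeg0[OF finC] by blast
      have i: "indeg C v \<noteq> 0" using v(2) ic by simp
      have "\<not>(indeg C v = 1 \<and> outdeg C v = 1)" using vW(2) S_iff by blast
      moreover have "indeg C v = 1 \<or> outdeg C v = 1" using C3 vW(1) vr False by blast
      ultimately show ?thesis using o i ic by auto
    qed
  qed
  show "X = {v\<in>Vn. indeg An v = 1 \<and> outdeg An v = 0}" by (rule Xn)
qed

lemma root_n: "root Vn An = r"
  unfolding root_def
proof (rule the_equality)
  show "r\<in>Vn \<and> indeg An r = 0" using rVn In0[of r] by simp
next
  fix x assume "x\<in>Vn \<and> indeg An x = 0"
  then show "x = r" using In0[of x] by simp
qed

lemma Anv_sub: "{(s,t)\<in>An. s\<noteq>v \<and> t\<noteq>v} \<subseteq> (Av v)\<^sup>*" if "v\<in>Vn"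
proof
  fix e assume "e \<in> {(s,t)\<in>An. s\<noteq>v \<and> t\<noteq>v}"
  then obtain s t where e: "e = (s,t)" "(s,t)\<in>An" "s\<noteq>v" "t\<noteq>v" by blast
  have st: "(s,t)\<in>A\<^sup>*" using An_lt[OF e(2)] by simp
  have "\<not>((s,v)\<in>A\<^sup>* \<and> (v,t)\<in>A\<^sup>*)"
  proof
    assume "(s,v)\<in>A\<^sup>* \<and> (v,t)\<in>A\<^sup>*"
    then have "(s,v)\<in>A\<^sup>+" "(v,t)\<in>A\<^sup>+" using lt_rt e(3,4) by (metis, metis)
    then show False using K[OF e(2) that] by blast
  qed
  then show "e \<in> (Av v)\<^sup>*" using avoid[OF st] e(1) by blast
qed

lemma tc_n: "tree_child X Vn An"
  unfolding tree_child_def visible_def root_n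
proof (intro ballI)
  fix v assume v: "v\<in>Vn"
  show "v \<in> Vn \<and> (v = r \<or> v \<in> X \<or> (\<exists>x\<in>X. \<forall>p. is_path An p r x \<longrightarrow> v \<in> set p))"
  proof (cases "v = r \<or> v\<in>X")
    case False
    then have vr: "v\<noteq>r" "v\<notin>X" by auto
    obtain x where x: "x\<in>X" "dm v x" using vis_dm v VnW vr(1) by blast
    have "x\<noteq>v" using x(1) vr(2) by blast
    have "\<forall>p. is_path An p r x \<longrightarrow> v \<in> set p"
    proof (intro allI impI, rule ccontr)
      fix p assume "is_path An p r x" "v \<notin> set p"
      then have "(r,x)\<in>{(s,t)\<in>An. s\<noteq>v \<and> t\<noteq>v}\<^sup>*" by (rule path_avoid)
      also have "\<dots> \<subseteq> (Av v)\<^sup>*" using rtrancl_subset_rtrancl[OF Anv_sub[OF v]] .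
      finally have "(r,x)\<in>(Av v)\<^sup>*" .
      then show False using dm_not[OF x(2) vr(1) \<open>x\<noteq>v\<close>] by blast
    qed
    then show ?thesis using v x(1) by blast
  qed (use v in blast)
qed

lemma nsc_n: "\<not> shortcut An u v"
proof
  assume "shortcut An u v"
  then have "(u,v)\<in>An \<and> (\<exists>w. (u,w)\<in>An \<and> (w,v)\<in>An\<^sup>+)" by (simp only: shortcut_iff)
  then obtain w where w: "(u,v)\<in>An" "(u,w)\<in>An" "(w,v)\<in>An\<^sup>+" by blast
  have "w\<in>Vn" using An_sub w(2) by blast
  moreover have "(u,w)\<in>A\<^sup>+" "(w,v)\<in>A\<^sup>+" using An_lt w(2) Ant_lt w(3) by auto
  ultimately show False using K[OF w(1)] by blast
qed

lemma normal_n: "normal X Vn An"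
  unfolding normal_def using phylo_n tc_n nsc_n by blast

lemma cl_iff: "x \<in> cluster X B u \<longleftrightarrow> x\<in>X \<and> (u,x)\<in>B\<^sup>*"
  unfolding cluster_def reach_iff by simp

lemma cluster_n: "v\<in>Vn \<Longrightarrow> cluster X An v = cluster X A v"
  unfolding cluster_def reach_iff using reach_n XVn by blast

end

context pn begin

lemma NS:
  assumes nm: "normal X V A"
  shows "Vn = V \<and> An = A"
proof -
  have tc: "tree_child X V A" and nsc: "\<And>u v. \<not> shortcut A u v"
    using nm unfolding normal_def by auto
  have WeqV: "W = V" using tc WV unfolding tree_child_def W_def Vvis_def by auto
  have CA: "(u,v)\<in>C \<longleftrightarrow> (u,v)\<in>A" for u v
  proof
    assume "(u,v)\<in>C"
    then have h: "u\<in>V" "v\<in>V" "(u,v)\<in>A\<^sup>+" "\<not>(\<exists>w\<in>V. (u,w)\<in>A\<^sup>+ \<and> (w,v)\<in>A\<^sup>+)"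
      unfolding C_iff WeqV by auto
    obtain z where z: "(u,z)\<in>A" "(z,v)\<in>A\<^sup>*" using tranclD[OF h(3)] by blast
    show "(u,v)\<in>A"
    proof (cases "z = v")
      case False
      then have "(z,v)\<in>A\<^sup>+" using z(2) lt_rt by blast
      moreover have "z\<in>V" using z(1) arcV by blast
      ultimately show ?thesis using h(4) z(1) by blast
    qed (use z in simp)
  next
    assume uv: "(u,v)\<in>A"
    have "\<not>(\<exists>w\<in>W. (u,w)\<in>A\<^sup>+ \<and> (w,v)\<in>A\<^sup>+)"
    proof
      assume "\<exists>w\<in>W. (u,w)\<in>A\<^sup>+ \<and> (w,v)\<in>A\<^sup>+"
      then obtain w where w: "(u,w)\<in>A\<^sup>+" "(w,v)\<in>A\<^sup>+" by blast
      obtain z where z: "(u,z)\<in>A" "(z,w)\<in>A\<^sup>*" using tranclD[OF w(1)] by blast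
      have "(z,v)\<in>A\<^sup>+" using z(2) w(2) by (meson rtrancl_trancl_trancl)
      then have "shortcut A u v" unfolding shortcut_iff using uv z(1) by blast
      then show False using nsc by blast
    qed
    moreover have "u\<in>W" "v\<in>W" using arcV uv WeqV by auto
    ultimately show "(u,v)\<in>C" unfolding C_iff using uv by blast
  qed
  then have CeqA: "C = A" by auto
  have Se: "S = {}"
  proof (rule ccontr)
    assume "S \<noteq> {}"
    then obtain v where v: "v\<in>S" by blast
    then have d: "indeg A v = 1" "outdeg A v = 1" using S_iff CeqA by auto
    have "v\<in>V" using SW v WeqV by blast
    moreover have "indeg A v \<noteq> 0" using d by simp
    ultimately have "(indeg A v = 1 \<and> outdeg A v = 0) \<or>
        (indeg A v = 1 \<and> outdeg A v \<ge> 2) \<or> (outdeg A v = 1 \<and> indeg A v \<ge> 2)" by (rule degs)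
    then show False using d by simp
  qed
  have "Vn = V" using Vn_iff Se WeqV by auto
  moreover have "Cb = {}" unfolding Cb_def Se by simp
  then have "An = A" using An_iff \<open>Vn = V\<close> CeqA arcV by auto
  ultimately show ?thesis by blast
qed

lemma iso_normal:
  assumes nm2: "normal X V2 A2" and iso: "iso_fix X V2 A2 V A"
  shows "normal X V A"
proof -
  interpret p2: pn X V2 A2 using nm2 unfolding normal_def by unfold_locales blast
  obtain f where f: "bij_betw f V2 V" "\<forall>u\<in>V2. \<forall>w\<in>V2. (u, w) \<in> A2 \<longleftrightarrow> (f u, f w) \<in> A"
    "\<forall>x\<in>X. f x = x"
    using iso unfolding iso_fix_def by blast
  define g where "g = inv_into V2 f"
  have gb: "bij_betw g V V2" unfolding g_def using bij_betw_inv_into[OF f(1)] .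
  have fg: "f (g v) = v" if "v\<in>V" for v
    unfolding g_def using f(1) that by (meson bij_betw_inv_into_right)
  have gf: "g (f u) = u" if "u\<in>V2" for u
    unfolding g_def using f(1) that by (meson bij_betw_inv_into_left)
  have gV: "g v \<in> V2" if "v\<in>V" for v using gb that bij_betwE by blast
  have arcg: "(s,t)\<in>A \<longleftrightarrow> (g s, g t)\<in>A2" if "s\<in>V" "t\<in>V" for s t
    using f(2) gV[OF that(1)] gV[OF that(2)] fg[OF that(1)] fg[OF that(2)] by metis
  have gX: "g x = x" if "x\<in>X" for x
  proof -
    have "x\<in>V2" using p2.XV that by blast
    then show ?thesis using gf f(3) that by metis
  qed
  have ginj: "inj_on g V" using gb bij_betw_imp_inj_on by blast
  have fr: "f p2.r \<in> V" using f(1) p2.rV bij_betwE by blast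
  have "\<forall>u. (u, f p2.r)\<notin>A"
  proof (intro allI notI)
    fix u assume "(u, f p2.r)\<in>A"
    then have "u\<in>V" using arcV by blast
    then have "(g u, g (f p2.r))\<in>A2" using arcg fr \<open>(u, f p2.r)\<in>A\<close> by blast
    then show False using gf p2.rV p2.r_nopar by metis
  qed
  then have "f p2.r = r" using r_uniq fr by blast
  then have gr: "g r = p2.r" using gf p2.rV by metis
  have pmap: "is_path A2 (map g p) (g a) (g b)" if "is_path A p a b" "a\<in>V" for p a b
  proof (rule path_map[OF that(1)])
    have "set p \<subseteq> V" using path_sub[OF that(1)] that(2) Asub by force
    then show "\<forall>s\<in>set p. \<forall>t\<in>set p. (s,t)\<in>A \<longrightarrow> (g s, g t)\<in>A2" using arcg by blast
  qed
  have tc: "tree_child X V A"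
    unfolding tree_child_def
  proof
    fix v assume vV: "v\<in>V"
    have "g v \<in> p2.W" using nm2 gV[OF vV] unfolding normal_def tree_child_def p2.W_def Vvis_def by blast
    then have "g v = p2.r \<or> (\<exists>x\<in>X. p2.dm (g v) x)" using p2.vis_iff by blast
    then have "v\<in>W"
    proof
      assume "g v = p2.r"
      then have "v = r" using gr ginj vV rV inj_on_eq_iff by metis
      then show "v\<in>W" using rW by blast
    next
      assume "\<exists>x\<in>X. p2.dm (g v) x"
      then obtain x where x: "x\<in>X" "p2.dm (g v) x" by blast
      have "dm v x" unfolding dm_def
      proof (intro allI impI)
        fix p assume pp: "is_path A p r x"
        have "is_path A2 (map g p) p2.r x" using pmap[OF pp rV] gr gX[OF x(1)] by simp
        then have "g v \<in> set (map g p)" using x(2) unfolding p2.dm_def by blast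
        then obtain q where q: "q\<in>set p" "g q = g v" by auto
        have "set p \<subseteq> V" using path_sub[OF pp] rV Asub by force
        then have "q\<in>V" using q(1) by blast
        then have "q = v" using inj_onD[OF ginj q(2)] vV by blast
        then show "v \<in> set p" using q by simp
      qed
      then show "v\<in>W" using vis_iff vV x(1) by blast
    qed
    then show "visible X V A v" unfolding W_def Vvis_def by simp
  qed
  have nsc: "\<not> shortcut A u v" for u v
  proof
    assume "shortcut A u v"
    then obtain p where p: "(u,v)\<in>A" "is_path A p u v" "length p \<ge> 3" unfolding shortcut_def by blast
    have uv: "u\<in>V" "v\<in>V" using arcV p(1) by auto
    have "(g u, g v)\<in>A2" using arcg uv p(1) by blast
    moreover have "is_path A2 (map g p) (g u) (g v)" using pmap[OF p(2) uv(1)] .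
    ultimately have "shortcut A2 (g u) (g v)" unfolding shortcut_def using p(3) by (intro conjI exI[of _ "map g p"]) auto
    then show False using nm2 unfolding normal_def by blast
  qed
  show ?thesis unfolding normal_def using pn tc nsc by blast
qed

lemma tree_hier: "is_tree Vn An \<longleftrightarrow> hierarchy (cluster X A ` W)"
proof
  assume tr: "is_tree Vn An"
  show "hierarchy (cluster X A ` W)"
    unfolding hierarchy_def
  proof (intro ballI)
    fix S1 T1 assume "S1 \<in> cluster X A ` W" "T1 \<in> cluster X A ` W"
    then obtain u1 u2 where u: "u1\<in>W" "u2\<in>W" "S1 = cluster X A u1" "T1 = cluster X A u2" by blast
    show "S1 \<inter> T1 = {} \<or> S1 \<subseteq> T1 \<or> T1 \<subseteq> S1"
    proof (rule ccontr)
      assume nh: "\<not>(S1 \<inter> T1 = {} \<or> S1 \<subseteq> T1 \<or> T1 \<subseteq> S1)"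
      then obtain x where x: "x\<in>X" "(u1,x)\<in>A\<^sup>*" "(u2,x)\<in>A\<^sup>*" using u cl_iff by blast
      have n12: "(u1,u2)\<notin>A\<^sup>*"
      proof
        assume "(u1,u2)\<in>A\<^sup>*"
        then have "T1 \<subseteq> S1" using u cl_iff by (meson rtrancl_trans subsetI)
        then show False using nh by blast
      qed
      have n21: "(u2,u1)\<notin>A\<^sup>*"
      proof
        assume "(u2,u1)\<in>A\<^sup>*"
        then have "S1 \<subseteq> T1" using u cl_iff by (meson rtrancl_trans subsetI)
        then show False using nh by blast
      qed
      define Q where "Q = {z\<in>W. (u1,z)\<in>A\<^sup>* \<and> (u2,z)\<in>A\<^sup>*}"
      have "x\<in>Q" using x XW Q_def by blast
      then obtain z where zQ: "z\<in>Q" and zmin: "\<And>y. (y,z)\<in>A\<^sup>+ \<Longrightarrow> y\<notin>Q"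
        using wfE_min[OF wf_lt] by metis
      have z: "z\<in>W" "(u1,z)\<in>A\<^sup>*" "(u2,z)\<in>A\<^sup>*" using zQ Q_def by auto
      have "z\<noteq>u1" using z(3) n21 by blast
      then have "(u1,z)\<in>A\<^sup>+" using z(2) lt_rt by blast
      then have "(u1,z)\<in>C\<^sup>+" using CT u(1) z(1) by blast
      then obtain p1 where p1: "(u1,p1)\<in>C\<^sup>*" "(p1,z)\<in>C" using tranclD2[of u1 z C] by blast
      have "z\<noteq>u2" using z(2) n12 by blast
      then have "(u2,z)\<in>A\<^sup>+" using z(3) lt_rt by blast
      then have "(u2,z)\<in>C\<^sup>+" using CT u(2) z(1) by blast
      then obtain p2 where p2: "(u2,p2)\<in>C\<^sup>*" "(p2,z)\<in>C" using tranclD2[of u2 z C] by blast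
      have "p1 \<noteq> p2"
      proof
        assume "p1 = p2"
        then have "p1\<in>Q" using p1 p2 C_W Cr_le Q_def by blast
        moreover have "(p1,z)\<in>A\<^sup>+" using C_lt p1(2) by blast
        ultimately show False using zmin by blast
      qed
      then have i2: "indeg C z \<ge> 2" using indeg2[OF finC] p1(2) p2(2) by blast
      have "z\<noteq>r" using CR p1(2) by blast
      moreover have "z\<notin>X" using CX i2 by fastforce
      ultimately have "indeg C z = 1 \<or> outdeg C z = 1" using C3 z(1) by blast
      then have o1: "outdeg C z = 1" using i2 by auto
      have "z\<notin>S" using S_iff i2 by auto
      then have zV: "z\<in>Vn" using Vn_iff z(1) by blast
      then have "reticulate Vn An z" unfolding reticulate_def using DI DO o1 i2 by simp
      then show False using tr zV unfolding is_tree_def by blast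
    qed
  qed
next
  assume hi: "hierarchy (cluster X A ` W)"
  show "is_tree Vn An"
    unfolding is_tree_def
  proof (intro ballI notI)
    fix z assume zV: "z\<in>Vn" and "reticulate Vn An z"
    then have "indeg An z \<ge> 2" unfolding reticulate_def by blast
    then obtain a b where ab: "a\<noteq>b" "(a,z)\<in>An" "(b,z)\<in>An" using indeg2[OF finAn] by blast
    have abV: "a\<in>Vn" "b\<in>Vn" using An_sub ab by auto
    have az: "(a,z)\<in>A\<^sup>+" "(b,z)\<in>A\<^sup>+" using An_lt ab by auto
    have nab: "(a,b)\<notin>A\<^sup>*"
    proof
      assume "(a,b)\<in>A\<^sup>*"
      then have "(a,b)\<in>A\<^sup>+" using lt_rt ab(1) by blast
      then show False using K[OF ab(2) abV(2)] az(2) by blast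
    qed
    have nba: "(b,a)\<notin>A\<^sup>*"
    proof
      assume "(b,a)\<in>A\<^sup>*"
      then have "(b,a)\<in>A\<^sup>+" using lt_rt ab(1) by metis
      then show False using K[OF ab(3) abV(1)] az(1) by blast
    qed
    have aW: "a\<in>W" "b\<in>W" using abV VnW by auto
    have aV: "a\<in>V" "b\<in>V" using aW WV by auto
    have "a\<noteq>r" using nab r_reach[OF aV(2)] by blast
    have "b\<noteq>r" using nba r_reach[OF aV(1)] by blast
    have "a\<notin>X" using leaf_nlt az(1) by blast
    have "b\<notin>X" using leaf_nlt az(2) by blast
    obtain xa where xa: "xa\<in>X" "dm a xa" using vis_dm aW(1) \<open>a\<noteq>r\<close> by blast
    obtain xb where xb: "xb\<in>X" "dm b xb" using vis_dm aW(2) \<open>b\<noteq>r\<close> by blast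
    have xa1: "xa \<in> cluster X A a" using cl_iff dm_le xa by blast
    have xa2: "xa \<notin> cluster X A b"
    proof
      assume "xa \<in> cluster X A b"
      then have "(b,xa)\<in>A\<^sup>*" using cl_iff by blast
      then show False using dm_cmp[OF xa(1) xa(2) aV(2)] nab nba by blast
    qed
    have xb1: "xb \<in> cluster X A b" using cl_iff dm_le xb by blast
    have xb2: "xb \<notin> cluster X A a"
    proof
      assume "xb \<in> cluster X A a"
      then have "(a,xb)\<in>A\<^sup>*" using cl_iff by blast
      then show False using dm_cmp[OF xb(1) xb(2) aV(1)] nab nba by blast
    qed
    have "z\<in>V" using zV VnW WV by blast
    moreover have "z\<noteq>r" using az(1) r_nolt by blast
    ultimately obtain y where y: "y\<in>X" "(z,y)\<in>A\<^sup>*" using reach_leaf by blast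
    have "y \<in> cluster X A a" "y \<in> cluster X A b" using cl_iff y az
      by (meson rtrancl_trans trancl_into_rtrancl)+
    moreover have "cluster X A a \<in> cluster X A ` W" "cluster X A b \<in> cluster X A ` W" using aW by auto
    ultimately show False using hi xa1 xa2 xb1 xb2 unfolding hierarchy_def by blast
  qed
qed

end

theorem theorem1:
  fixes X V :: "'v set" and A :: "('v \<times> 'v) set"
  assumes "finite X" and "phylo_network X V A"
  shows "normal X (norm_V X V A) (norm_A X V A)
    \<and> (iso_fix X (norm_V X V A) (norm_A X V A) V A \<longleftrightarrow> normal X V A)
    \<and> iso_fix X (norm_V X (norm_V X V A) (norm_A X V A)) (norm_A X (norm_V X V A) (norm_A X V A))
                 (norm_V X V A) (norm_A X V A)
    \<and> (\<forall>u\<in>norm_V X V A. \<forall>v\<in>norm_V X V A. reach (norm_A X V A) u v \<longleftrightarrow> reach A u v)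
    \<and> (\<forall>v\<in>norm_V X V A. cluster X (norm_A X V A) v = cluster X A v)
    \<and> (is_tree (norm_V X V A) (norm_A X V A) \<longleftrightarrow> hierarchy (cluster X A ` Vvis X V A))"
proof -
  interpret pn X V A using assms(2) by unfold_locales
  have n1: "normal X (norm_V X V A) (norm_A X V A)" by (rule normal_n)
  interpret n: pn X "norm_V X V A" "norm_A X V A" using n1 unfolding normal_def by unfold_locales blast
  have idem: "norm_V X (norm_V X V A) (norm_A X V A) = norm_V X V A \<and>
      norm_A X (norm_V X V A) (norm_A X V A) = norm_A X V A" using n.NS n1 by blast
  have iso_id: "\<And>V1 A1. iso_fix X V1 A1 V1 A1"
    unfolding iso_fix_def by (rule exI[of _ id]) simp
  have iso_eq: "iso_fix X (norm_V X V A) (norm_A X V A) V A \<longleftrightarrow> normal X V A"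
  proof
    assume "iso_fix X (norm_V X V A) (norm_A X V A) V A"
    then show "normal X V A" using iso_normal n1 by blast
  next
    assume "normal X V A"
    then have "norm_V X V A = V \<and> norm_A X V A = A" by (rule NS)
    then show "iso_fix X (norm_V X V A) (norm_A X V A) V A" using iso_id by simp
  qed
  have reach: "\<forall>u\<in>norm_V X V A. \<forall>v\<in>norm_V X V A. reach (norm_A X V A) u v \<longleftrightarrow> reach A u v"
  proof (intro ballI)
    fix u v assume "u\<in>norm_V X V A" "v\<in>norm_V X V A"
    then show "reach (norm_A X V A) u v \<longleftrightarrow> reach A u v" unfolding reach_iff by (rule reach_n)
  qed
  have cl: "\<forall>v\<in>norm_V X V A. cluster X (norm_A X V A) v = cluster X A v"
    using cluster_n by blast
  have tree: "is_tree (norm_V X V A) (norm_A X V A) \<longleftrightarrow> hierarchy (cluster X A ` Vvis X V A)"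
    using tree_hier unfolding W_def .
  show ?thesis using n1 iso_eq idem iso_id reach cl tree by simp
qed

end
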